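(* $\mathbb{C}\oplus\mathbb{C}$ is $W^*$-$C^*$-projective.
   Context: A unital $C^*$-algebra $\mathcal{A}$ is $W^*$-$C^*$-projective if for every von Neumann algebra $\mathcal{B}$, every unital $C^*$-algebra $\mathcal{M}$, every unital surjective $\ast$-homomorphism $\pi:\mathcal{B}\to\mathcal{M}$ and every unital $\ast$-homomorphism $\phi:\mathcal{A}\to\mathcal{M}$, there is a unital $\ast$-homomorphism $\psi:\mathcal{A}\to\mathcal{B}$ with $\pi\circ\psi=\phi$. *)

theory Defs
  imports "HOL-Analysis.Analysis"
begin

class complex_vector_c = real_vector +
  fixes scaleC :: "complex \<Rightarrow> 'a \<Rightarrow> 'a" (infixr \<open>*\<^sub>C\<close> 75)
  assumes scaleC_add_right: "a *\<^sub>C (x + y) = a *\<^sub>C x + a *\<^sub>C y"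
    and scaleC_add_left: "(a + b) *\<^sub>C x = a *\<^sub>C x + b *\<^sub>C x"
    and scaleC_scaleC: "a *\<^sub>C (b *\<^sub>C x) = (a * b) *\<^sub>C x"
    and scaleC_one: "1 *\<^sub>C x = x"
    and scaleR_scaleC: "r *\<^sub>R x = complex_of_real r *\<^sub>C x"

class complex_normed_vector_c = complex_vector_c + real_normed_vector +
  assumes norm_scaleC: "norm (a *\<^sub>C x) = cmod a * norm x"

class chilbert = complex_normed_vector_c + banach +
  fixes cinner :: "'a \<Rightarrow> 'a \<Rightarrow> complex"
  assumes cinner_add_right: "cinner x (y + z) = cinner x y + cinner x z"
    and cinner_scaleC_right: "cinner x (a *\<^sub>C y) = a * cinner x y"
    and cinner_commute: "cinner y x = cnj (cinner x y)"
    and norm_eq_sqrt_cinner: "norm x = sqrt (Re (cinner x x))"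

text \<open>Unital C*-algebras (unit of norm 1, i.e. nonzero).\<close>
class cstar_alg = complex_normed_vector_c + real_normed_algebra_1 + banach +
  fixes cstar :: "'a \<Rightarrow> 'a"
  assumes scaleC_mult_left: "(a *\<^sub>C x) * y = a *\<^sub>C (x * y)"
    and scaleC_mult_right: "x * (a *\<^sub>C y) = a *\<^sub>C (x * y)"
    and cstar_cstar: "cstar (cstar x) = x"
    and cstar_add: "cstar (x + y) = cstar x + cstar y"
    and cstar_scaleC: "cstar (a *\<^sub>C x) = cnj a *\<^sub>C cstar x"
    and cstar_mult: "cstar (x * y) = cstar y * cstar x"
    and cstar_identity: "norm (cstar x * x) = (norm x)\<^sup>2"

definition unital_star_hom :: "('a::cstar_alg \<Rightarrow> 'b::cstar_alg) \<Rightarrow> bool" where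
  "unital_star_hom f \<longleftrightarrow>
     (\<forall>x y. f (x + y) = f x + f y) \<and> (\<forall>a x. f (a *\<^sub>C x) = a *\<^sub>C f x) \<and>
     (\<forall>x y. f (x * y) = f x * f y) \<and> (\<forall>x. f (cstar x) = cstar (f x)) \<and> f 1 = 1"

definition bounded_clinear :: "('a::complex_normed_vector_c \<Rightarrow> 'b::complex_normed_vector_c) \<Rightarrow> bool" where
  "bounded_clinear T \<longleftrightarrow>
     (\<forall>x y. T (x + y) = T x + T y) \<and> (\<forall>a x. T (a *\<^sub>C x) = a *\<^sub>C T x) \<and>
     (\<exists>K. \<forall>x. norm (T x) \<le> norm x * K)"

definition adjoint :: "('h::chilbert \<Rightarrow> 'h) \<Rightarrow> ('h \<Rightarrow> 'h)" where
  "adjoint T = (THE S. \<forall>x y. cinner (T x) y = cinner x (S y))"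

definition commutant :: "('h::chilbert \<Rightarrow> 'h) set \<Rightarrow> ('h \<Rightarrow> 'h) set" where
  "commutant S = {T. bounded_clinear T \<and> (\<forall>A\<in>S. T \<circ> A = A \<circ> T)}"

definition von_neumann_algebra :: "('h::chilbert \<Rightarrow> 'h) set \<Rightarrow> bool" where
  "von_neumann_algebra S \<longleftrightarrow>
     (\<forall>T\<in>S. bounded_clinear T) \<and> id \<in> S \<and>
     (\<forall>A\<in>S. \<forall>B\<in>S. (\<lambda>v. A v + B v) \<in> S) \<and>
     (\<forall>a. \<forall>A\<in>S. (\<lambda>v. a *\<^sub>C A v) \<in> S) \<and>
     (\<forall>A\<in>S. \<forall>B\<in>S. A \<circ> B \<in> S) \<and>
     (\<forall>A\<in>S. adjoint A \<in> S) \<and>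
     commutant (commutant S) = S"

definition unital_star_hom_on_ops :: "('h::chilbert \<Rightarrow> 'h) set \<Rightarrow> (('h \<Rightarrow> 'h) \<Rightarrow> 'm::cstar_alg) \<Rightarrow> bool" where
  "unital_star_hom_on_ops S p \<longleftrightarrow>
     (\<forall>A\<in>S. \<forall>B\<in>S. p (\<lambda>v. A v + B v) = p A + p B) \<and>
     (\<forall>a. \<forall>A\<in>S. p (\<lambda>v. a *\<^sub>C A v) = a *\<^sub>C p A) \<and>
     (\<forall>A\<in>S. \<forall>B\<in>S. p (A \<circ> B) = p A * p B) \<and>
     (\<forall>A\<in>S. p (adjoint A) = cstar (p A)) \<and> p id = 1"

definition unital_star_hom_to_ops :: "('a::cstar_alg \<Rightarrow> ('h::chilbert \<Rightarrow> 'h)) \<Rightarrow> bool" where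
  "unital_star_hom_to_ops f \<longleftrightarrow>
     (\<forall>x y. f (x + y) = (\<lambda>v. f x v + f y v)) \<and> (\<forall>a x. f (a *\<^sub>C x) = (\<lambda>v. a *\<^sub>C f x v)) \<and>
     (\<forall>x y. f (x * y) = f x \<circ> f y) \<and> (\<forall>x. f (cstar x) = adjoint (f x)) \<and> f 1 = id"

datatype cc = CC (cc1: complex) (cc2: complex)

lemma cc_eq_iff: "x = y \<longleftrightarrow> cc1 x = cc1 y \<and> cc2 x = cc2 y"
  by (cases x; cases y) auto

instantiation cc :: "{comm_ring_1}"
begin
definition "0 = CC 0 0"
definition "1 = CC 1 1"
definition "x + y = CC (cc1 x + cc1 y) (cc2 x + cc2 y)"
definition "x - y = CC (cc1 x - cc1 y) (cc2 x - cc2 y)"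
definition "- x = CC (- cc1 x) (- cc2 x)"
definition "x * y = CC (cc1 x * cc1 y) (cc2 x * cc2 y)"
instance
  by standard (auto simp: cc_eq_iff zero_cc_def one_cc_def plus_cc_def minus_cc_def
      uminus_cc_def times_cc_def algebra_simps)
end

lemma cc_simps [simp]:
  "cc1 0 = 0" "cc2 0 = 0" "cc1 1 = 1" "cc2 1 = 1"
  "cc1 (x + y) = cc1 x + cc1 y" "cc2 (x + y) = cc2 x + cc2 y"
  "cc1 (x - y) = cc1 x - cc1 y" "cc2 (x - y) = cc2 x - cc2 y"
  "cc1 (- x) = - cc1 x" "cc2 (- x) = - cc2 x"
  "cc1 (x * y) = cc1 x * cc1 y" "cc2 (x * y) = cc2 x * cc2 y"
  by (simp_all add: zero_cc_def one_cc_def plus_cc_def minus_cc_def uminus_cc_def times_cc_def)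

instantiation cc :: real_vector
begin
definition "r *\<^sub>R x = CC (r *\<^sub>R cc1 x) (r *\<^sub>R cc2 x)"
instance
  by standard (auto simp: cc_eq_iff scaleR_cc_def algebra_simps scaleR_add_right scaleR_add_left)
end

lemma cc_scaleR [simp]: "cc1 (r *\<^sub>R x) = r *\<^sub>R cc1 x" "cc2 (r *\<^sub>R x) = r *\<^sub>R cc2 x"
  by (simp_all add: scaleR_cc_def)

instantiation cc :: real_normed_algebra_1
begin
definition norm_cc_def: "norm x = max (cmod (cc1 x)) (cmod (cc2 x))"
definition sgn_cc_def: "sgn (x::cc) = inverse (norm x) *\<^sub>R x"
definition dist_cc_def: "dist (x::cc) y = norm (x - y)"
definition uniformity_cc_def:
  "(uniformity :: (cc \<times> cc) filter) = (INF e\<in>{0 <..}. principal {(x, y). dist x y < e})"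
definition open_cc_def:
  "open (U :: cc set) \<longleftrightarrow> (\<forall>x\<in>U. eventually (\<lambda>(x', y). x' = x \<longrightarrow> y \<in> U) uniformity)"
instance
proof
  fix x y :: cc and r :: real
  show "norm (x + y) \<le> norm x + norm y"
    unfolding norm_cc_def
    using norm_triangle_ineq[of "cc1 x" "cc1 y"] norm_triangle_ineq[of "cc2 x" "cc2 y"]
    by (auto simp: max_def)
  show "norm (r *\<^sub>R x) = \<bar>r\<bar> * norm x"
    unfolding norm_cc_def by (simp add: max_mult_distrib_left)
  show "norm x = 0 \<longleftrightarrow> x = 0"
    unfolding norm_cc_def by (auto simp: cc_eq_iff max_def)
  show "norm (x * y) \<le> norm x * norm y"
    unfolding norm_cc_def
    by (auto simp: norm_mult max_def intro: mult_mono order_trans[OF _ mult_right_mono])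
       (smt (verit, best) mult_mono norm_ge_zero)+
  show "norm (1::cc) = 1" by (simp add: norm_cc_def)
  show "r *\<^sub>R x * y = r *\<^sub>R (x * y)" by (simp add: cc_eq_iff)
  show "x * r *\<^sub>R y = r *\<^sub>R (x * y)" by (simp add: cc_eq_iff)
qed (simp_all add: sgn_cc_def dist_cc_def uniformity_cc_def open_cc_def)
end

lemma norm_cc1_le: "cmod (cc1 x) \<le> norm x" and norm_cc2_le: "cmod (cc2 x) \<le> norm x"
  by (simp_all add: norm_cc_def)

instance cc :: banach
proof
  fix X :: "nat \<Rightarrow> cc"
  assume X: "Cauchy X"
  have c1: "Cauchy (\<lambda>n. cc1 (X n))"
  proof (rule metric_CauchyI)
    fix e :: real assume "e > 0"
    then obtain M where M: "\<forall>m\<ge>M. \<forall>n\<ge>M. dist (X m) (X n) < e" using X metric_CauchyD by blast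
    show "\<exists>M. \<forall>m\<ge>M. \<forall>n\<ge>M. dist (cc1 (X m)) (cc1 (X n)) < e"
      using M norm_cc1_le[of "X _ - X _"] by (metis cc_simps(7) dist_cc_def dist_norm order.strict_trans1)
  qed
  have c2: "Cauchy (\<lambda>n. cc2 (X n))"
  proof (rule metric_CauchyI)
    fix e :: real assume "e > 0"
    then obtain M where M: "\<forall>m\<ge>M. \<forall>n\<ge>M. dist (X m) (X n) < e" using X metric_CauchyD by blast
    show "\<exists>M. \<forall>m\<ge>M. \<forall>n\<ge>M. dist (cc2 (X m)) (cc2 (X n)) < e"
      using M norm_cc2_le[of "X _ - X _"] by (metis cc_simps(8) dist_cc_def dist_norm order.strict_trans1)
  qed
  obtain a where a: "(\<lambda>n. cc1 (X n)) \<longlonglongrightarrow> a" using c1 Cauchy_convergent_iff convergent_def by blast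
  obtain b where b: "(\<lambda>n. cc2 (X n)) \<longlonglongrightarrow> b" using c2 Cauchy_convergent_iff convergent_def by blast
  have "X \<longlonglongrightarrow> CC a b"
  proof (rule LIMSEQ_I)
    fix r :: real assume "r > 0"
    obtain N1 where N1: "\<forall>n\<ge>N1. norm (cc1 (X n) - a) < r" using a \<open>r > 0\<close> LIMSEQ_D by blast
    obtain N2 where N2: "\<forall>n\<ge>N2. norm (cc2 (X n) - b) < r" using b \<open>r > 0\<close> LIMSEQ_D by blast
    show "\<exists>no. \<forall>n\<ge>no. norm (X n - CC a b) < r"
      using N1 N2 by (intro exI[of _ "max N1 N2"]) (auto simp: norm_cc_def)
  qed
  then show "convergent X" by (auto simp: convergent_def)
qed

instantiation cc :: cstar_alg
begin
definition "a *\<^sub>C x = CC (a * cc1 x) (a * cc2 x)"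
definition "cstar x = CC (cnj (cc1 x)) (cnj (cc2 x))"
instance
proof
  fix x y :: cc and a b :: complex and r :: real
  show "norm (a *\<^sub>C x) = cmod a * norm x"
    by (simp add: norm_cc_def scaleC_cc_def norm_mult max_mult_distrib_left)
  show "norm (cstar x * x) = (norm x)\<^sup>2"
    by (simp add: norm_cc_def cstar_cc_def norm_mult max_def power2_eq_square)
       (smt (verit, ccfv_SIG) mult_mono norm_ge_zero)
  show "r *\<^sub>R x = complex_of_real r *\<^sub>C x"
    using scaleR_conv_of_real[of r "cc1 x"] scaleR_conv_of_real[of r "cc2 x"]
    by (simp add: cc_eq_iff scaleC_cc_def)
qed (auto simp: cc_eq_iff scaleC_cc_def cstar_cc_def algebra_simps)
end

end

theory Submission
  imports Defs
begin

lemma scaleC_zero_right [simp]: "a *\<^sub>C (0::'a::complex_vector_c) = 0"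
proof -
  have "a *\<^sub>C (0::'a) = a *\<^sub>C (0 + 0)" by simp
  also have "\<dots> = a *\<^sub>C 0 + a *\<^sub>C 0" by (rule scaleC_add_right)
  finally show ?thesis by simp
qed

lemma scaleC_zero_left [simp]: "0 *\<^sub>C (x::'a::complex_vector_c) = 0"
  using scaleR_scaleC[of 0 x] by simp

lemma scaleC_minus_right: "a *\<^sub>C (- x::'a::complex_vector_c) = - (a *\<^sub>C x)"
proof -
  have "a *\<^sub>C x + a *\<^sub>C (- x) = a *\<^sub>C (x + - x)" by (simp only: scaleC_add_right)
  then have "a *\<^sub>C x + a *\<^sub>C (- x) = 0" by simp
  then show ?thesis by (simp add: add_eq_0_iff)
qed

lemma scaleC_diff_right: "a *\<^sub>C (x - y::'a::complex_vector_c) = a *\<^sub>C x - a *\<^sub>C y"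
  by (simp only: diff_conv_add_uminus scaleC_add_right scaleC_minus_right)

lemma scaleC_minus_left: "(- a) *\<^sub>C (x::'a::complex_vector_c) = - (a *\<^sub>C x)"
proof -
  have "a *\<^sub>C x + (- a) *\<^sub>C x = (a + - a) *\<^sub>C x" by (simp only: scaleC_add_left)
  then have "a *\<^sub>C x + (- a) *\<^sub>C x = 0" by simp
  then show ?thesis by (simp add: add_eq_0_iff)
qed

lemma scaleC_diff_left: "(a - b) *\<^sub>C (x::'a::complex_vector_c) = a *\<^sub>C x - b *\<^sub>C x"
  by (simp only: diff_conv_add_uminus scaleC_add_left scaleC_minus_left)

lemma scaleC_real: "complex_of_real r *\<^sub>C (x::'a::complex_vector_c) = r *\<^sub>R x"
  by (simp add: scaleR_scaleC)

lemma scaleC_sum_right: "a *\<^sub>C (\<Sum>i\<in>A. f i) = (\<Sum>i\<in>A. a *\<^sub>C (f i::'a::complex_vector_c))"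
  by (induction A rule: infinite_finite_induct) (simp_all add: scaleC_add_right)

lemma scaleC_neg1: "(-1) *\<^sub>C (x::'a::complex_vector_c) = - x"
  using scaleC_minus_left[of 1 x] by (simp add: scaleC_one)

lemma bounded_linear_scaleC: "bounded_linear (\<lambda>x::'a::complex_normed_vector_c. a *\<^sub>C x)"
proof (rule bounded_linear_intro[where K="cmod a"])
  fix x y :: 'a and r :: real
  show "a *\<^sub>C (x + y) = a *\<^sub>C x + a *\<^sub>C y" by (rule scaleC_add_right)
  show "a *\<^sub>C r *\<^sub>R x = r *\<^sub>R a *\<^sub>C x" by (simp add: scaleR_scaleC scaleC_scaleC mult.commute)
  show "norm (a *\<^sub>C x) \<le> norm x * cmod a" by (simp add: norm_scaleC mult.commute)
qed

lemma cinner_zero_right [simp]: "cinner x (0::'a::chilbert) = 0"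
proof -
  have "cinner x (0::'a) = cinner x (0 + 0)" by simp
  also have "\<dots> = cinner x 0 + cinner x 0" by (rule cinner_add_right)
  finally show ?thesis by simp
qed

lemma cinner_zero_left [simp]: "cinner (0::'a::chilbert) x = 0"
proof -
  have "cinner (0::'a) x = cnj (cinner x 0)" by (rule cinner_commute)
  then show ?thesis by simp
qed

lemma cinner_add_left: "cinner (x + y) (z::'a::chilbert) = cinner x z + cinner y z"
proof -
  have "cinner (x + y) z = cnj (cinner z (x + y))" by (rule cinner_commute)
  also have "\<dots> = cnj (cinner z x) + cnj (cinner z y)" by (simp add: cinner_add_right)
  also have "cnj (cinner z x) = cinner x z" by (rule cinner_commute[symmetric])
  also have "cnj (cinner z y) = cinner y z" by (rule cinner_commute[symmetric])
  finally show ?thesis .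
qed

lemma cinner_scaleC_left: "cinner (a *\<^sub>C x) (y::'a::chilbert) = cnj a * cinner x y"
proof -
  have "cinner (a *\<^sub>C x) y = cnj (cinner y (a *\<^sub>C x))" by (rule cinner_commute)
  also have "\<dots> = cnj a * cnj (cinner y x)" by (simp add: cinner_scaleC_right)
  also have "cnj (cinner y x) = cinner x y" by (rule cinner_commute[symmetric])
  finally show ?thesis .
qed

lemma cinner_minus_right: "cinner x (- y::'a::chilbert) = - cinner x y"
  using cinner_scaleC_right[of x "-1" y] by (simp add: scaleC_neg1)

lemma cinner_minus_left: "cinner (- x::'a::chilbert) y = - cinner x y"
  using cinner_scaleC_left[of "-1" x y] by (simp add: scaleC_neg1)

lemma cinner_diff_right: "cinner x (y - z::'a::chilbert) = cinner x y - cinner x z"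
  by (simp only: cinner_add_right cinner_minus_right diff_conv_add_uminus)

lemma cinner_diff_left: "cinner (x - y::'a::chilbert) z = cinner x z - cinner y z"
  by (simp only: cinner_add_left cinner_minus_left diff_conv_add_uminus)

lemma cinner_scaleR_right: "cinner x (r *\<^sub>R y::'a::chilbert) = complex_of_real r * cinner x y"
  by (simp add: scaleR_scaleC cinner_scaleC_right)

lemma cinner_scaleR_left: "cinner (r *\<^sub>R x::'a::chilbert) y = complex_of_real r * cinner x y"
  by (simp add: scaleR_scaleC cinner_scaleC_left)

lemma cinner_sum_right: "cinner x (\<Sum>i\<in>A. f i) = (\<Sum>i\<in>A. cinner x (f i::'a::chilbert))"
  by (induction A rule: infinite_finite_induct) (simp_all add: cinner_add_right)

lemma cinner_sum_left: "cinner (\<Sum>i\<in>A. f i) x = (\<Sum>i\<in>A. cinner (f i::'a::chilbert) x)"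
  by (induction A rule: infinite_finite_induct) (simp_all add: cinner_add_left)

lemma cinner_self_real: "Im (cinner x (x::'a::chilbert)) = 0"
proof -
  have "cinner x x = cnj (cinner x x)" by (rule cinner_commute)
  then have "Im (cinner x x) = Im (cnj (cinner x x))" by simp
  then have "Im (cinner x x) = - Im (cinner x x)" by simp
  then show ?thesis by simp
qed

lemma cinner_self_Re: "Re (cinner x (x::'a::chilbert)) = (norm x)\<^sup>2"
proof -
  have n: "norm x = sqrt (Re (cinner x x))" by (rule norm_eq_sqrt_cinner)
  have "Re (cinner x x) \<ge> 0"
  proof (rule ccontr)
    assume "\<not> ?thesis"
    then have "sqrt (Re (cinner x x)) < 0" by simp
    with n show False using norm_ge_zero[of x] by linarith
  qed
  with n show ?thesis by simp
qed

lemma cinner_self: "cinner x (x::'a::chilbert) = complex_of_real ((norm x)\<^sup>2)"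
  using cinner_self_real[of x] cinner_self_Re[of x] by (simp add: complex_eq_iff)

lemma cinner_self_eq_0 [simp]: "cinner x x = 0 \<longleftrightarrow> x = (0::'a::chilbert)"
  by (simp add: cinner_self)

lemma norm_sq_cinner: "(norm x)\<^sup>2 = Re (cinner x (x::'a::chilbert))"
  by (simp add: cinner_self_Re)

lemma cinner_ext: "(\<And>z. cinner z x = cinner z y) \<Longrightarrow> x = (y::'a::chilbert)"
proof -
  assume h: "\<And>z. cinner z x = cinner z y"
  have "cinner (x - y) (x - y) = 0" using h[of "x - y"] by (simp add: cinner_diff_right)
  then show ?thesis by simp
qed


lemma norm_add_sq: "(norm (x + y))\<^sup>2 = (norm x)\<^sup>2 + (norm y)\<^sup>2 + 2 * Re (cinner x (y::'a::chilbert))"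
proof -
  have c: "cinner y x = cnj (cinner x y)" by (rule cinner_commute)
  have "Re (cinner y x) = Re (cinner x y)" unfolding c by simp
  then show ?thesis
    by (simp add: norm_sq_cinner cinner_add_left cinner_add_right)
qed

lemma norm_diff_sq: "(norm (x - y))\<^sup>2 = (norm x)\<^sup>2 + (norm y)\<^sup>2 - 2 * Re (cinner x (y::'a::chilbert))"
  using norm_add_sq[of x "- y"] by (simp add: cinner_minus_right)

lemma norm_scaleC_sq: "(norm (a *\<^sub>C x))\<^sup>2 = (cmod a)\<^sup>2 * (norm (x::'a::chilbert))\<^sup>2"
  by (simp add: norm_scaleC power_mult_distrib)

lemma Cauchy_Schwarz: "cmod (cinner x y) \<le> norm x * norm (y::'a::chilbert)"
proof (cases "y = 0")
  case True then show ?thesis by simp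
next
  case False
  define t where "t = cinner y x / complex_of_real ((norm y)\<^sup>2)"
  have ny: "norm y > 0" using False by simp
  have "0 \<le> (norm (x - t *\<^sub>C y))\<^sup>2" by simp
  also have "\<dots> = (norm x)\<^sup>2 + (cmod t)\<^sup>2 * (norm y)\<^sup>2 - 2 * Re (cinner x (t *\<^sub>C y))"
    by (simp add: norm_diff_sq norm_scaleC_sq)
  also have "cinner x (t *\<^sub>C y) = t * cinner x y" by (simp add: cinner_scaleC_right)
  also have "t * cinner x y = (cmod (cinner x y))\<^sup>2 / (norm y)\<^sup>2"
  proof -
    have "cinner y x = cnj (cinner x y)" by (rule cinner_commute)
    then have "t * cinner x y = cnj (cinner x y) * cinner x y / complex_of_real ((norm y)\<^sup>2)"
      by (simp add: t_def)
    also have "cnj (cinner x y) * cinner x y = complex_of_real ((cmod (cinner x y))\<^sup>2)"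
      using complex_norm_square[of "cinner x y"] by (simp add: mult.commute)
    finally show ?thesis by simp
  qed
  also have "(cmod t)\<^sup>2 = (cmod (cinner x y))\<^sup>2 / (norm y)\<^sup>2 / (norm y)\<^sup>2"
  proof -
    have c: "cinner y x = cnj (cinner x y)" by (rule cinner_commute)
    have "cmod (cinner y x) = cmod (cinner x y)" unfolding c by simp
    have "cmod t = cmod (cinner y x) / cmod (complex_of_real ((norm y)\<^sup>2))"
      by (simp only: t_def norm_divide)
    also have "cmod (complex_of_real ((norm y)\<^sup>2)) = (norm y)\<^sup>2"
      by (simp only: norm_of_real) simp
    finally show ?thesis using \<open>cmod (cinner y x) = cmod (cinner x y)\<close>
      by (simp add: power_divide power2_eq_square)
  qed
  finally have "0 \<le> (norm x)\<^sup>2 - (cmod (cinner x y))\<^sup>2 / (norm y)\<^sup>2"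
    using ny by (simp add: field_simps power2_eq_square)
  then have "(cmod (cinner x y))\<^sup>2 \<le> (norm x)\<^sup>2 * (norm y)\<^sup>2"
    using ny by (simp add: field_simps)
  then have "(cmod (cinner x y))\<^sup>2 \<le> (norm x * norm y)\<^sup>2" by (simp add: power_mult_distrib)
  then show ?thesis by (rule power2_le_imp_le) simp
qed

lemma bcl_add: "bounded_clinear T \<Longrightarrow> T (x + y) = T x + T y"
  by (simp add: bounded_clinear_def)
lemma bcl_scaleC: "bounded_clinear T \<Longrightarrow> T (a *\<^sub>C x) = a *\<^sub>C T x"
  by (simp add: bounded_clinear_def)
lemma bcl_zero: "bounded_clinear T \<Longrightarrow> T 0 = 0"
  using bcl_scaleC[of T 0 0] by simp
lemma bcl_minus: "bounded_clinear T \<Longrightarrow> T (- x) = - T x"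
  using bcl_scaleC[of T "-1" x] by (simp add: scaleC_neg1)
lemma bcl_diff: "bounded_clinear T \<Longrightarrow> T (x - y) = T x - T y"
  by (simp only: bcl_add bcl_minus diff_conv_add_uminus)
lemma bcl_scaleR: "bounded_clinear T \<Longrightarrow> T (r *\<^sub>R x) = r *\<^sub>R T x"
  by (simp add: scaleR_scaleC bcl_scaleC)
lemma bcl_sum: "bounded_clinear T \<Longrightarrow> T (\<Sum>i\<in>A. f i) = (\<Sum>i\<in>A. T (f i))"
  by (induction A rule: infinite_finite_induct) (auto simp: bcl_add bcl_zero)

lemma bcl_bounded_linear: "bounded_clinear T \<Longrightarrow> bounded_linear T"
proof -
  assume T: "bounded_clinear T"
  then obtain K where K: "\<forall>x. norm (T x) \<le> norm x * K" by (auto simp: bounded_clinear_def)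
  show ?thesis
  proof (rule bounded_linear_intro)
    show "T (x + y) = T x + T y" for x y using T by (rule bcl_add)
    show "T (r *\<^sub>R x) = r *\<^sub>R T x" for r x using T by (rule bcl_scaleR)
    show "norm (T x) \<le> norm x * K" for x using K by blast
  qed
qed

lemma bcl_tendsto: "bounded_clinear T \<Longrightarrow> (X \<longlongrightarrow> x) F \<Longrightarrow> ((\<lambda>n. T (X n)) \<longlongrightarrow> T x) F"
  by (rule bounded_linear.tendsto[OF bcl_bounded_linear])

lemma bcl_bound: "bounded_clinear T \<Longrightarrow> \<exists>K>0. \<forall>x. norm (T x) \<le> norm x * K"
proof -
  assume "bounded_clinear T"
  then obtain K where K: "\<forall>x. norm (T x) \<le> norm x * K" by (auto simp: bounded_clinear_def)
  have "norm (T x) \<le> norm x * max K 1" for x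
  proof -
    have "norm (T x) \<le> norm x * K" using K by blast
    also have "\<dots> \<le> norm x * max K 1" by (rule mult_left_mono) simp_all
    finally show ?thesis .
  qed
  then show ?thesis by (intro exI[of _ "max K 1"]) simp
qed

lemma bcl_intro:
  assumes "\<And>x y. T (x + y) = T x + T y" "\<And>a x. T (a *\<^sub>C x) = a *\<^sub>C T x"
    "\<And>x. norm (T x) \<le> norm x * K"
  shows "bounded_clinear T"
  using assms unfolding bounded_clinear_def by blast

lemma bcl_id: "bounded_clinear id"
  by (rule bcl_intro[where K=1]) auto

lemma bcl_comp: "bounded_clinear A \<Longrightarrow> bounded_clinear B \<Longrightarrow> bounded_clinear (A \<circ> B)"
proof -
  assume A: "bounded_clinear A" and B: "bounded_clinear B"
  obtain K where K: "K > 0" "\<forall>x. norm (A x) \<le> norm x * K" using bcl_bound[OF A] by auto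
  obtain L where L: "L > 0" "\<forall>x. norm (B x) \<le> norm x * L" using bcl_bound[OF B] by auto
  show ?thesis
  proof (rule bcl_intro[where K="L * K"])
    fix x
    have "norm (A (B x)) \<le> norm (B x) * K" using K by blast
    also have "\<dots> \<le> (norm x * L) * K" using L K by (intro mult_right_mono) auto
    finally show "norm ((A \<circ> B) x) \<le> norm x * (L * K)" by (simp add: mult.assoc)
  qed (simp_all add: A B bcl_add bcl_scaleC)
qed

lemma bcl_plus: "bounded_clinear A \<Longrightarrow> bounded_clinear B \<Longrightarrow> bounded_clinear (\<lambda>v. A v + B v)"
proof -
  assume A: "bounded_clinear A" and B: "bounded_clinear B"
  obtain K where K: "K > 0" "\<forall>x. norm (A x) \<le> norm x * K" using bcl_bound[OF A] by auto
  obtain L where L: "L > 0" "\<forall>x. norm (B x) \<le> norm x * L" using bcl_bound[OF B] by auto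
  show ?thesis
  proof (rule bcl_intro[where K="K + L"])
    fix x
    have "norm (A x + B x) \<le> norm (A x) + norm (B x)" by (rule norm_triangle_ineq)
    also have "\<dots> \<le> norm x * K + norm x * L" using K L by (intro add_mono) auto
    finally show "norm (A x + B x) \<le> norm x * (K + L)" by (simp add: distrib_left)
  qed (simp_all add: A B bcl_add bcl_scaleC scaleC_add_right)
qed

lemma bcl_scale: "bounded_clinear A \<Longrightarrow> bounded_clinear (\<lambda>v. a *\<^sub>C A v)"
proof -
  assume A: "bounded_clinear A"
  obtain K where K: "K > 0" "\<forall>x. norm (A x) \<le> norm x * K" using bcl_bound[OF A] by auto
  show ?thesis
  proof (rule bcl_intro[where K="cmod a * K"])
    fix x
    have "norm (a *\<^sub>C A x) = cmod a * norm (A x)" by (rule norm_scaleC)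
    also have "\<dots> \<le> cmod a * (norm x * K)" using K by (intro mult_left_mono) auto
    finally show "norm (a *\<^sub>C A x) \<le> norm x * (cmod a * K)" by (simp add: algebra_simps)
  next
    fix b x show "a *\<^sub>C A (b *\<^sub>C x) = b *\<^sub>C a *\<^sub>C A x"
      by (simp add: A bcl_scaleC scaleC_scaleC mult.commute)
  qed (simp_all add: A bcl_add scaleC_add_right)
qed

lemma bcl_minus_fun: "bounded_clinear A \<Longrightarrow> bounded_clinear B \<Longrightarrow> bounded_clinear (\<lambda>v. A v - B v)"
proof -
  assume "bounded_clinear A" "bounded_clinear B"
  then have "bounded_clinear (\<lambda>v. A v + (\<lambda>v. (-1) *\<^sub>C B v) v)" by (intro bcl_plus bcl_scale)
  then show ?thesis by (simp add: scaleC_neg1)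
qed

section \<open>Orthogonal projections onto closed subspaces\<close>

definition csubspace :: "'a::complex_vector_c set \<Rightarrow> bool" where
  "csubspace V \<longleftrightarrow> 0 \<in> V \<and> (\<forall>x\<in>V. \<forall>y\<in>V. x + y \<in> V) \<and> (\<forall>a. \<forall>x\<in>V. a *\<^sub>C x \<in> V)"

lemma csubspace_0: "csubspace V \<Longrightarrow> 0 \<in> V" by (simp add: csubspace_def)
lemma csubspace_add: "csubspace V \<Longrightarrow> x \<in> V \<Longrightarrow> y \<in> V \<Longrightarrow> x + y \<in> V" by (simp add: csubspace_def)
lemma csubspace_scaleC: "csubspace V \<Longrightarrow> x \<in> V \<Longrightarrow> a *\<^sub>C x \<in> V" by (simp add: csubspace_def)
lemma csubspace_minus: "csubspace V \<Longrightarrow> x \<in> V \<Longrightarrow> - x \<in> V"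
  using csubspace_scaleC[of V x "-1"] by (simp add: scaleC_neg1)
lemma csubspace_diff: "csubspace V \<Longrightarrow> x \<in> V \<Longrightarrow> y \<in> V \<Longrightarrow> x - y \<in> V"
  by (simp only: diff_conv_add_uminus) (intro csubspace_add csubspace_minus)

lemma scaleC_2: "(2::complex) *\<^sub>C (x::'a::complex_vector_c) = x + x"
  using scaleC_add_left[of 1 1 x] by (simp add: scaleC_one one_add_one)

lemma parallelogram: "(norm (a + b))\<^sup>2 + (norm (a - b))\<^sup>2 = 2 * (norm a)\<^sup>2 + 2 * (norm (b::'a::chilbert))\<^sup>2"
  by (simp add: norm_add_sq norm_diff_sq)

lemma proj_exists:
  fixes x :: "'a::chilbert"
  assumes V: "csubspace V" "closed V"
  shows "\<exists>m\<in>V. \<forall>v\<in>V. cinner v (x - m) = 0"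
proof -
  define d where "d = infdist x V"
  have Vne: "V \<noteq> {}" using csubspace_0[OF V(1)] by auto
  have d0: "d \<ge> 0" by (simp add: d_def infdist_nonneg)
  have dle: "d \<le> norm (x - v)" if "v \<in> V" for v
    using infdist_le[OF that, of x] by (simp add: d_def dist_norm)
  have "\<exists>v\<in>V. norm (x - v) < d + 1 / real (Suc n)" for n
  proof -
    have "(INF a\<in>V. dist x a) < d + 1 / real (Suc n)"
      using infdist_notempty[OF Vne, of x] d_def by simp
    then show ?thesis
      by (subst (asm) cINF_less_iff) (auto simp: Vne dist_norm intro!: bdd_belowI[of _ 0])
  qed
  then obtain v where v: "\<And>n. v n \<in> V" "\<And>n. norm (x - v n) < d + 1 / real (Suc n)"
    by metis
  have mid: "d \<le> norm (x - (1/2::complex) *\<^sub>C (v n + v m))" for n m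
    by (intro dle csubspace_scaleC[OF V(1)] csubspace_add[OF V(1)] v)
  have key: "(norm (v n - v m))\<^sup>2 \<le> (8 * d + 4) / real (Suc N)" if "n \<ge> N" "m \<ge> N" for n m N
  proof -
    let ?a = "x - v n" and ?b = "x - v m"
    have p: "(norm (?a + ?b))\<^sup>2 + (norm (?a - ?b))\<^sup>2 = 2 * (norm ?a)\<^sup>2 + 2 * (norm ?b)\<^sup>2"
      by (rule parallelogram)
    have ab: "?a + ?b = (2::complex) *\<^sub>C (x - (1/2::complex) *\<^sub>C (v n + v m))"
      by (simp add: scaleC_diff_right scaleC_scaleC scaleC_one scaleC_2)
    have "norm (?a + ?b) = 2 * norm (x - (1/2::complex) *\<^sub>C (v n + v m))"
      by (subst ab) (simp add: norm_scaleC)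
    then have s1: "(norm (?a + ?b))\<^sup>2 \<ge> 4 * d\<^sup>2"
      using mid[of n m] d0 by (simp add: power_mult_distrib power_mono)
    have e1: "1 / real (Suc n) \<le> 1 / real (Suc N)" "1 / real (Suc m) \<le> 1 / real (Suc N)"
      using that by (auto simp: frac_le)
    have e2: "1 / real (Suc N) \<le> 1" by simp
    define e where "e = 1 / real (Suc N)"
    have e0: "e > 0" "e \<le> 1" by (auto simp: e_def)
    have na: "norm ?a \<le> d + e" "norm ?b \<le> d + e" using v(2)[of n] v(2)[of m] e1 by (auto simp: e_def)
    have "(norm ?a)\<^sup>2 \<le> (d + e)\<^sup>2" "(norm ?b)\<^sup>2 \<le> (d + e)\<^sup>2"
      using na by (auto intro!: power_mono)
    then have "(norm (?a - ?b))\<^sup>2 \<le> 4 * (d + e)\<^sup>2 - 4 * d\<^sup>2" using p s1 by linarith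
    also have "\<dots> = 8 * d * e + 4 * e * e" by (simp add: power2_eq_square algebra_simps)
    also have "\<dots> \<le> 8 * d * e + 4 * e" using e0 by (simp add: mult_left_le)
    also have "\<dots> = (8 * d + 4) * e" by (simp add: algebra_simps)
    finally show ?thesis by (simp add: e_def norm_minus_commute)
  qed
  have "Cauchy v"
  proof (rule metric_CauchyI)
    fix r :: real assume r: "r > 0"
    obtain N0 where N0: "(8 * d + 4) / r\<^sup>2 < real N0"
      using reals_Archimedean2 by blast
    define N where "N = N0"
    have N: "(8 * d + 4) / r\<^sup>2 < real (Suc N)" using N0 by (simp add: N_def)
    have "(8 * d + 4) / real (Suc N) < r\<^sup>2"
      using N r d0 by (simp add: field_simps)
    then have "\<forall>n\<ge>N. \<forall>m\<ge>N. (norm (v n - v m))\<^sup>2 < r\<^sup>2"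
      using key by (meson order_le_less_trans)
    then have "\<forall>n\<ge>N. \<forall>m\<ge>N. dist (v n) (v m) < r"
      using r by (auto simp: dist_norm intro: power_less_imp_less_base[of _ 2])
    then show "\<exists>M. \<forall>m\<ge>M. \<forall>n\<ge>M. dist (v m) (v n) < r" by blast
  qed
  then obtain m where m: "v \<longlonglongrightarrow> m" using Cauchy_convergent_iff convergent_def by blast
  have mV: "m \<in> V" using closed_sequentially[OF V(2) v(1) m] .
  have "norm (x - m) \<le> d"
  proof -
    have lim1: "(\<lambda>n. norm (x - v n)) \<longlonglongrightarrow> norm (x - m)"
      by (intro tendsto_intros m)
    have "(\<lambda>n. inverse (real (Suc n))) \<longlonglongrightarrow> 0" by (rule LIMSEQ_inverse_real_of_nat)
    then have "(\<lambda>n. 1 / real (Suc n)) \<longlonglongrightarrow> 0" by (simp add: inverse_eq_divide)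
    then have lim2: "(\<lambda>n. d + 1 / real (Suc n)) \<longlonglongrightarrow> d + 0"
      by (intro tendsto_add tendsto_const)
    show ?thesis using LIMSEQ_le[OF lim1 lim2] v(2) by (simp add: less_imp_le)
  qed
  then have minimal: "\<And>w. w \<in> V \<Longrightarrow> norm (x - m) \<le> norm (x - w)" using dle by (meson order_trans)
  have "cinner w (x - m) = 0" if w: "w \<in> V" for w
  proof (rule ccontr)
    assume ne: "cinner w (x - m) \<noteq> 0"
    define z where "z = x - m"
    define c where "c = cinner w z"
    define s where "s = 1 / ((norm w)\<^sup>2 + 1)"
    have w0: "(norm w)\<^sup>2 + 1 > 0" by (simp add: add_nonneg_pos)
    have s0: "s > 0" using w0 by (simp add: s_def)
    define t where "t = complex_of_real s * c"
    have "m + t *\<^sub>C w \<in> V" by (intro csubspace_add[OF V(1)] csubspace_scaleC[OF V(1)] mV w)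
    then have "norm z \<le> norm (z - t *\<^sub>C w)" using minimal[of "m + t *\<^sub>C w"] by (simp add: z_def algebra_simps)
    then have "(norm z)\<^sup>2 \<le> (norm (z - t *\<^sub>C w))\<^sup>2" by (simp add: power_mono)
    also have "\<dots> = (norm z)\<^sup>2 + (cmod t)\<^sup>2 * (norm w)\<^sup>2 - 2 * Re (cinner z (t *\<^sub>C w))"
      by (simp add: norm_diff_sq norm_scaleC_sq)
    also have "cinner z (t *\<^sub>C w) = t * cnj c"
      by (simp add: cinner_scaleC_right c_def cinner_commute[of z w])
    also have "Re (t * cnj c) = s * (cmod c)\<^sup>2"
      unfolding cmod_power2 by (simp add: t_def power2_eq_square algebra_simps)
    also have "(cmod t)\<^sup>2 = s\<^sup>2 * (cmod c)\<^sup>2" using s0 by (simp add: t_def norm_mult power_mult_distrib)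
    finally have "2 * s * (cmod c)\<^sup>2 \<le> s\<^sup>2 * (cmod c)\<^sup>2 * (norm w)\<^sup>2" by simp
    moreover have "(cmod c)\<^sup>2 > 0" using ne by (simp add: c_def z_def)
    ultimately have "2 * s \<le> s\<^sup>2 * (norm w)\<^sup>2" by (simp add: algebra_simps)
    then have "2 \<le> s * (norm w)\<^sup>2" using s0 by (simp add: power2_eq_square algebra_simps)
    moreover have "s * (norm w)\<^sup>2 < 1" using w0 by (simp add: s_def field_simps)
    ultimately show False by simp
  qed
  with mV show ?thesis by blast
qed

definition proj :: "'a::chilbert set \<Rightarrow> 'a \<Rightarrow> 'a" where
  "proj V x = (SOME m. m \<in> V \<and> (\<forall>v\<in>V. cinner v (x - m) = 0))"

locale closed_csubspace =
  fixes V :: "'a::chilbert set"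
  assumes sub: "csubspace V" and clo: "closed V"
begin

lemma proj_props: "proj V x \<in> V \<and> (\<forall>v\<in>V. cinner v (x - proj V x) = 0)"
proof -
  obtain m where "m \<in> V" "\<forall>v\<in>V. cinner v (x - m) = 0" using proj_exists[OF sub clo, of x] by blast
  then have "\<exists>m. m \<in> V \<and> (\<forall>v\<in>V. cinner v (x - m) = 0)" by blast
  then show ?thesis unfolding proj_def by (rule someI_ex)
qed

lemma proj_in: "proj V x \<in> V" using proj_props by blast
lemma proj_orth: "v \<in> V \<Longrightarrow> cinner v (x - proj V x) = 0" using proj_props by blast
lemma proj_orth': "v \<in> V \<Longrightarrow> cinner (x - proj V x) v = 0"
proof -
  assume v: "v \<in> V"
  have "cinner (x - proj V x) v = cnj (cinner v (x - proj V x))" by (rule cinner_commute)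
  then show ?thesis using proj_orth[OF v] by simp
qed

lemma proj_unique:
  assumes "m \<in> V" "\<And>v. v \<in> V \<Longrightarrow> cinner v (x - m) = 0"
  shows "proj V x = m"
proof -
  have d: "proj V x - m \<in> V" using csubspace_diff[OF sub proj_in assms(1)] .
  have 1: "cinner (proj V x - m) (x - m) = 0" using assms(2)[OF d] .
  have 2: "cinner (proj V x - m) (x - proj V x) = 0" using proj_orth[OF d] .
  have "cinner (proj V x - m) ((x - m) - (x - proj V x)) = 0"
    using 1 2 by (simp only: cinner_diff_right) simp
  moreover have "(x - m) - (x - proj V x) = proj V x - m" by simp
  ultimately have "cinner (proj V x - m) (proj V x - m) = 0" by simp
  then show ?thesis by simp
qed

lemma proj_fix: "x \<in> V \<Longrightarrow> proj V x = x"
  by (rule proj_unique) simp_all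

lemma proj_orth_zero: "(\<And>v. v \<in> V \<Longrightarrow> cinner v x = 0) \<Longrightarrow> proj V x = 0"
  by (rule proj_unique) (simp_all add: csubspace_0[OF sub])

lemma proj_add: "proj V (x + y) = proj V x + proj V y"
proof (rule proj_unique)
  show "proj V x + proj V y \<in> V" by (rule csubspace_add[OF sub proj_in proj_in])
  fix v assume v: "v \<in> V"
  have "x + y - (proj V x + proj V y) = (x - proj V x) + (y - proj V y)" by (simp add: algebra_simps)
  then show "cinner v (x + y - (proj V x + proj V y)) = 0"
    by (simp only: cinner_add_right proj_orth[OF v]) simp
qed

lemma proj_scaleC: "proj V (a *\<^sub>C x) = a *\<^sub>C proj V x"
proof (rule proj_unique)
  show "a *\<^sub>C proj V x \<in> V" by (rule csubspace_scaleC[OF sub proj_in])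
  fix v assume v: "v \<in> V"
  have "cinner v (a *\<^sub>C x - a *\<^sub>C proj V x) = cinner v (a *\<^sub>C (x - proj V x))"
    by (simp only: scaleC_diff_right)
  also have "\<dots> = a * cinner v (x - proj V x)" by (rule cinner_scaleC_right)
  also have "\<dots> = 0" using proj_orth[OF v] by simp
  finally show "cinner v (a *\<^sub>C x - a *\<^sub>C proj V x) = 0" .
qed

lemma proj_idem: "proj V (proj V x) = proj V x"
  by (rule proj_fix[OF proj_in])

lemma proj_selfadj: "cinner (proj V x) y = cinner x (proj V y)"
proof -
  have a: "cinner (proj V x) y = cinner (proj V x) (proj V y) + cinner (proj V x) (y - proj V y)"
    by (simp add: cinner_diff_right)
  have b: "cinner (proj V x) (y - proj V y) = 0" by (rule proj_orth[OF proj_in])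
  have c: "cinner x (proj V y) = cinner (proj V x) (proj V y) + cinner (x - proj V x) (proj V y)"
    by (simp add: cinner_diff_left)
  have d: "cinner (x - proj V x) (proj V y) = 0" by (rule proj_orth'[OF proj_in])
  show ?thesis using a b c d by simp
qed

lemma proj_norm: "norm (proj V x) \<le> norm x"
proof -
  have e: "x = proj V x + (x - proj V x)" by simp
  have "(norm x)\<^sup>2 = (norm (proj V x + (x - proj V x)))\<^sup>2" using e by simp
  also have "\<dots> = (norm (proj V x))\<^sup>2 + (norm (x - proj V x))\<^sup>2 + 2 * Re (cinner (proj V x) (x - proj V x))"
    by (rule norm_add_sq)
  also have "cinner (proj V x) (x - proj V x) = 0" by (rule proj_orth[OF proj_in])
  finally have "(norm (proj V x))\<^sup>2 \<le> (norm x)\<^sup>2" by simp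
  then show ?thesis by (rule power2_le_imp_le) simp
qed

lemma proj_bcl: "bounded_clinear (proj V)"
  by (rule bcl_intro[where K=1]) (simp_all add: proj_add proj_scaleC proj_norm)

end

section \<open>Riesz representation and adjoints\<close>

lemma adjoint_eqI:
  assumes "\<And>x y. cinner (T x) y = cinner x (S y)"
  shows "adjoint T = S"
  unfolding adjoint_def
proof (rule the_equality)
  show "\<forall>x y. cinner (T x) y = cinner x (S y)" using assms by blast
  fix S' assume h: "\<forall>x y. cinner (T x) y = cinner x (S' y)"
  show "S' = S"
  proof
    fix y show "S' y = S y"
      by (rule cinner_ext) (use h assms in metis)
  qed
qed

lemma closed_kernel:
  fixes f :: "'a::chilbert \<Rightarrow> complex"
  assumes "bounded_linear f"
  shows "closed {x. f x = 0}"
proof -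
  have "continuous_on UNIV f" using assms by (rule linear_continuous_on)
  then show ?thesis using closed_Collect_eq[of f "\<lambda>x. 0"] by (simp add: continuous_on_const)
qed

lemma riesz:
  fixes f :: "'a::chilbert \<Rightarrow> complex"
  assumes add: "\<And>x y. f (x + y) = f x + f y" and sc: "\<And>a x. f (a *\<^sub>C x) = a * f x"
    and bd: "\<And>x. cmod (f x) \<le> norm x * K"
  shows "\<exists>z. \<forall>x. f x = cinner z x"
proof (cases "\<forall>x. f x = 0")
  case True then show ?thesis by (intro exI[of _ 0]) simp
next
  case False
  then obtain u where u: "f u \<noteq> 0" by blast
  define V where "V = {x. f x = 0}"
  have f0: "f 0 = 0" using sc[of 0 0] by simp
  have bl: "bounded_linear f"
  proof (rule bounded_linear_intro[where K=K])
    show "f (x + y) = f x + f y" for x y by (rule add)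
    show "f (r *\<^sub>R x) = r *\<^sub>R f x" for r x
      using sc[of "complex_of_real r" x] by (simp add: scaleR_scaleC scaleR_conv_of_real)
    show "norm (f x) \<le> norm x * K" for x using bd by simp
  qed
  have sub: "csubspace V" unfolding csubspace_def V_def using add sc f0 by simp
  have clo: "closed V" unfolding V_def by (rule closed_kernel[OF bl])
  interpret closed_csubspace V using sub clo by unfold_locales
  define w where "w = u - proj V u"
  have fw: "f w = f u"
  proof -
    have "f (proj V u) = 0" using proj_in[of u] by (simp add: V_def)
    moreover have "f w = f u + f ((-1) *\<^sub>C proj V u)" unfolding w_def
      by (simp add: add[symmetric] scaleC_neg1)
    ultimately show ?thesis by (simp add: sc)
  qed
  have w0: "w \<noteq> 0" using fw u by (auto simp: f0)
  have orth: "cinner w v = 0" if "v \<in> V" for v unfolding w_def by (rule proj_orth'[OF that])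
  define z where "z = (cnj (f w) / complex_of_real ((norm w)\<^sup>2)) *\<^sub>C w"
  have "f x = cinner z x" for x
  proof -
    have "f (f x *\<^sub>C w + (- f w) *\<^sub>C x) = f x * f w + (- f w) * f x"
      by (simp add: add sc)
    then have "f x *\<^sub>C w + (- f w) *\<^sub>C x \<in> V" by (simp add: V_def)
    then have "cinner w (f x *\<^sub>C w + (- f w) *\<^sub>C x) = 0" by (rule orth)
    then have "f x * cinner w w - f w * cinner w x = 0"
      by (simp add: cinner_add_right cinner_scaleC_right)
    then have e: "f x * complex_of_real ((norm w)\<^sup>2) = f w * cinner w x"
      by (simp add: cinner_self)
    have nw: "complex_of_real ((norm w)\<^sup>2) \<noteq> 0" using w0 by simp
    have "cinner z x = f w / complex_of_real ((norm w)\<^sup>2) * cinner w x"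
      by (simp add: z_def cinner_scaleC_left)
    also have "\<dots> = f x" using e nw by (simp add: field_simps)
    finally show ?thesis by simp
  qed
  then show ?thesis by blast
qed

lemma adjoint_exists:
  fixes T :: "'a::chilbert \<Rightarrow> 'a"
  assumes T: "bounded_clinear T"
  shows "\<exists>S. \<forall>x y. cinner (T x) y = cinner x (S y)"
proof -
  obtain K where K: "K > 0" "\<forall>x. norm (T x) \<le> norm x * K" using bcl_bound[OF T] by blast
  have "\<exists>z. \<forall>x. cinner y (T x) = cinner z x" for y
  proof (rule riesz[where K="norm y * K"])
    show "cinner y (T (x1 + x2)) = cinner y (T x1) + cinner y (T x2)" for x1 x2
      by (simp add: bcl_add[OF T] cinner_add_right)
    show "cinner y (T (a *\<^sub>C x)) = a * cinner y (T x)" for a x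
      by (simp add: bcl_scaleC[OF T] cinner_scaleC_right)
    show "cmod (cinner y (T x)) \<le> norm x * (norm y * K)" for x
    proof -
      have "cmod (cinner y (T x)) \<le> norm y * norm (T x)" by (rule Cauchy_Schwarz)
      also have "\<dots> \<le> norm y * (norm x * K)" using K by (intro mult_left_mono) auto
      finally show ?thesis by (simp add: algebra_simps)
    qed
  qed
  then obtain S where S: "\<And>y x. cinner y (T x) = cinner (S y) x" by metis
  have "cinner (T x) y = cinner x (S y)" for x y
  proof -
    have "cinner (T x) y = cnj (cinner y (T x))" by (rule cinner_commute)
    also have "\<dots> = cnj (cinner (S y) x)" by (simp add: S)
    also have "\<dots> = cinner x (S y)" by (rule cinner_commute[symmetric])
    finally show ?thesis .
  qed
  then show ?thesis by blast
qed

lemma adjoint_prop: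
  assumes "bounded_clinear T"
  shows "cinner (T x) y = cinner x (adjoint T y)"
proof -
  obtain S where S: "\<forall>x y. cinner (T x) y = cinner x (S y)" using adjoint_exists[OF assms] by blast
  then have "adjoint T = S" by (intro adjoint_eqI) blast
  then show ?thesis using S by simp
qed

definition selfadj :: "('a::chilbert \<Rightarrow> 'a) \<Rightarrow> bool" where
  "selfadj T \<longleftrightarrow> (\<forall>x y. cinner (T x) y = cinner x (T y))"

lemma selfadj_adjoint: "selfadj T \<Longrightarrow> adjoint T = T"
  unfolding selfadj_def by (rule adjoint_eqI) blast

lemma selfadj_D: "selfadj T \<Longrightarrow> cinner (T x) y = cinner x (T y)"
  unfolding selfadj_def by blast

lemma selfadj_kernel_orth:
  assumes "selfadj T" "T w = 0"
  shows "cinner (T x) w = 0"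
  using selfadj_D[OF assms(1), of x w] assms(2) by simp

section \<open>A Banach algebra of bounded operators\<close>

typedef (overloaded) 'a bop = "UNIV :: ('a::real_normed_vector \<Rightarrow>\<^sub>L 'a) set" by simp

setup_lifting type_definition_bop

instantiation bop :: (real_normed_vector) "{real_normed_algebra, monoid_mult}"
begin

lift_definition zero_bop :: "'a bop" is 0 .
lift_definition one_bop :: "'a bop" is id_blinfun .
lift_definition plus_bop :: "'a bop \<Rightarrow> 'a bop \<Rightarrow> 'a bop" is "(+)" .
lift_definition minus_bop :: "'a bop \<Rightarrow> 'a bop \<Rightarrow> 'a bop" is "(-)" .
lift_definition uminus_bop :: "'a bop \<Rightarrow> 'a bop" is uminus .
lift_definition times_bop :: "'a bop \<Rightarrow> 'a bop \<Rightarrow> 'a bop" is blinfun_compose .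
lift_definition scaleR_bop :: "real \<Rightarrow> 'a bop \<Rightarrow> 'a bop" is scaleR .
lift_definition norm_bop :: "'a bop \<Rightarrow> real" is norm .
definition sgn_bop :: "'a bop \<Rightarrow> 'a bop" where "sgn_bop x = inverse (norm x) *\<^sub>R x"
definition dist_bop :: "'a bop \<Rightarrow> 'a bop \<Rightarrow> real" where "dist_bop x y = norm (x - y)"
definition uniformity_bop :: "('a bop \<times> 'a bop) filter" where
  "uniformity_bop = (INF e\<in>{0 <..}. principal {(x, y). dist x y < e})"
definition open_bop :: "'a bop set \<Rightarrow> bool" where
  "open_bop U = (\<forall>x\<in>U. \<forall>\<^sub>F (x', y) in uniformity. x' = x \<longrightarrow> y \<in> U)"

instance
proof
  fix a b c :: "'a bop" and r s :: real
  show "a + b + c = a + (b + c)" by transfer (simp add: algebra_simps)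
  show "a + b = b + a" by transfer (simp add: algebra_simps)
  show "0 + a = a" by transfer simp
  show "- a + a = 0" by transfer simp
  show "a - b = a + - b" by transfer simp
  show "r *\<^sub>R (a + b) = r *\<^sub>R a + r *\<^sub>R b" by transfer (simp add: scaleR_add_right)
  show "(r + s) *\<^sub>R a = r *\<^sub>R a + s *\<^sub>R a" by transfer (simp add: scaleR_add_left)
  show "r *\<^sub>R s *\<^sub>R a = (r * s) *\<^sub>R a" by transfer simp
  show "1 *\<^sub>R a = a" by transfer simp
  show "a * b * c = a * (b * c)" by transfer (rule blinfun_eqI, simp)
  show "(a + b) * c = a * c + b * c" by transfer (rule blinfun_eqI, simp add: blinfun.bilinear_simps)
  show "a * (b + c) = a * b + a * c" by transfer (rule blinfun_eqI, simp add: blinfun.bilinear_simps)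
  show "r *\<^sub>R a * b = r *\<^sub>R (a * b)" by transfer (rule blinfun_eqI, simp add: blinfun.bilinear_simps)
  show "a * r *\<^sub>R b = r *\<^sub>R (a * b)" by transfer (rule blinfun_eqI, simp add: blinfun.bilinear_simps)
  show "1 * a = a" by transfer (rule blinfun_eqI, simp)
  show "a * 1 = a" by transfer (rule blinfun_eqI, simp)
  show "norm (a * b) \<le> norm a * norm b" by transfer (rule norm_blinfun_compose)
  show "norm (a + b) \<le> norm a + norm b" by transfer (rule norm_triangle_ineq)
  show "norm (r *\<^sub>R a) = \<bar>r\<bar> * norm a" by transfer simp
  show "(norm a = 0) = (a = 0)" by transfer simp
  show "dist a b = norm (a - b)" by (simp add: dist_bop_def)
  show "sgn a = inverse (norm a) *\<^sub>R a" by (simp add: sgn_bop_def)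
  show "(uniformity :: ('a bop \<times> 'a bop) filter) = (INF e\<in>{0 <..}. principal {(x, y). dist x y < e})"
    by (simp add: uniformity_bop_def)
  fix U :: "'a bop set"
  show "open U = (\<forall>x\<in>U. \<forall>\<^sub>F (x', y) in uniformity. x' = x \<longrightarrow> y \<in> U)"
    by (simp add: open_bop_def)
qed

end

lemma dist_bop_Rep: "dist (a::'a::real_normed_vector bop) b = dist (Rep_bop a) (Rep_bop b)"
  by (simp add: dist_norm norm_bop.rep_eq minus_bop.rep_eq)

instance bop :: (banach) banach
proof
  fix X :: "nat \<Rightarrow> 'a bop"
  assume "Cauchy X"
  then have "Cauchy (\<lambda>n. Rep_bop (X n))" unfolding Cauchy_def by (simp add: dist_bop_Rep)
  then obtain L where L: "(\<lambda>n. Rep_bop (X n)) \<longlonglongrightarrow> L" using Cauchy_convergent_iff convergent_def by blast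
  have "X \<longlonglongrightarrow> Abs_bop L"
    using L unfolding LIMSEQ_def by (simp add: dist_bop_Rep Abs_bop_inverse)
  then show "convergent X" by (auto simp: convergent_def)
qed

definition app :: "'a::real_normed_vector bop \<Rightarrow> 'a \<Rightarrow> 'a" where
  "app A x = blinfun_apply (Rep_bop A) x"

lemma app_mult [simp]: "app (A * B) x = app A (app B x)"
  by (simp add: app_def times_bop.rep_eq)
lemma app_one [simp]: "app 1 x = x"
  by (simp add: app_def one_bop.rep_eq)
lemma app_zero [simp]: "app 0 x = 0"
  by (simp add: app_def zero_bop.rep_eq)
lemma app_add [simp]: "app (A + B) x = app A x + app B x"
  by (simp add: app_def plus_bop.rep_eq blinfun.bilinear_simps)
lemma app_diff [simp]: "app (A - B) x = app A x - app B x"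
  by (simp add: app_def minus_bop.rep_eq blinfun.bilinear_simps)
lemma app_scaleR [simp]: "app (r *\<^sub>R A) x = r *\<^sub>R app A x"
  by (simp add: app_def scaleR_bop.rep_eq blinfun.bilinear_simps)
lemma app_norm: "norm (app A x) \<le> norm A * norm x"
  by (simp add: app_def norm_bop.rep_eq norm_blinfun)
lemma app_linear_add: "app A (x + y) = app A x + app A y"
  by (simp add: app_def blinfun.bilinear_simps)
lemma app_linear_scaleR: "app A (r *\<^sub>R x) = r *\<^sub>R app A x"
  by (simp add: app_def blinfun.bilinear_simps)

lemma bounded_linear_app_left: "bounded_linear (\<lambda>A. app A x)"
  by (rule bounded_linear_intro[where K="norm x"]) (simp_all add: app_norm)

lemma app_suminf: "summable f \<Longrightarrow> app (suminf f) x = (\<Sum>n. app (f n) x)"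
  by (rule bounded_linear.suminf[OF bounded_linear_app_left])

lemma app_summable: "summable f \<Longrightarrow> summable (\<lambda>n. app (f n) x)"
  by (rule bounded_linear.summable[OF bounded_linear_app_left])

definition mkop :: "('a::real_normed_vector \<Rightarrow> 'a) \<Rightarrow> 'a bop" where
  "mkop T = Abs_bop (Blinfun T)"

lemma app_mkop: "bounded_linear T \<Longrightarrow> app (mkop T) = T"
  by (rule ext) (simp add: app_def mkop_def Abs_bop_inverse bounded_linear_Blinfun_apply)

lemma norm_mkop_le: "bounded_linear T \<Longrightarrow> 0 \<le> b \<Longrightarrow> (\<And>x. norm (T x) \<le> b * norm x) \<Longrightarrow> norm (mkop T) \<le> b"
  unfolding norm_bop.rep_eq mkop_def
  by (simp add: Abs_bop_inverse) (rule norm_blinfun_bound, simp_all add: bounded_linear_Blinfun_apply)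

lemma norm_one_bop_le: "norm (1 :: 'a::real_normed_vector bop) \<le> 1"
  by (simp add: norm_bop.rep_eq one_bop.rep_eq norm_blinfun_id_le)

lemma norm_power_bop_le: "norm (A::'a::real_normed_vector bop) \<le> 1 \<Longrightarrow> norm (A ^ n) \<le> 1"
proof (induction n)
  case 0 then show ?case by (simp add: norm_one_bop_le)
next
  case (Suc n)
  have "norm (A ^ Suc n) \<le> norm A * norm (A ^ n)" by (simp add: norm_mult_ineq)
  also have "\<dots> \<le> 1 * 1" using Suc by (intro mult_mono) auto
  finally show ?case by simp
qed

section \<open>Coefficients of the square-root series\<close>

fun gam :: "nat \<Rightarrow> real" where
  "gam n = (if n = 0 then 0 else if n = 1 then 1/2 else (1/2) * (\<Sum>i\<in>{1..<n}. gam i * gam (n - i)))"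

declare gam.simps [simp del]

lemma gam_0 [simp]: "gam 0 = 0" by (simp add: gam.simps)
lemma gam_1 [simp]: "gam 1 = 1/2" by (simp add: gam.simps)
lemma gam_Suc0 [simp]: "gam (Suc 0) = 1/2" by (simp add: gam.simps)
lemma gam_ge2: "n \<ge> 2 \<Longrightarrow> gam n = (1/2) * (\<Sum>i\<in>{1..<n}. gam i * gam (n - i))"
  by (subst gam.simps) simp

lemma gam_nonneg: "gam n \<ge> 0"
proof (induction n rule: less_induct)
  case (less n)
  consider "n = 0" | "n = 1" | "n \<ge> 2" by linarith
  then show ?case
  proof cases
    case 3
    have "(\<Sum>i\<in>{1..<n}. gam i * gam (n - i)) \<ge> 0"
      by (intro sum_nonneg mult_nonneg_nonneg less.IH) auto
    then show ?thesis by (simp add: gam_ge2[OF 3])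
  qed simp_all
qed

definition conv :: "nat \<Rightarrow> real" where
  "conv k = (\<Sum>i\<le>k. gam i * gam (k - i))"

lemma conv_eq: "conv k = 2 * gam k - (if k = 1 then 1 else 0)"
proof -
  consider "k = 0" | "k = 1" | "k \<ge> 2" by linarith
  then show ?thesis
  proof cases
    case 1 then show ?thesis by (simp add: conv_def)
  next
    case 2 then show ?thesis by (simp add: conv_def)
  next
    case 3
    have "{..k} = insert 0 (insert k {1..<k})" using 3 by auto
    then have "conv k = gam 0 * gam k + (gam k * gam 0 + (\<Sum>i\<in>{1..<k}. gam i * gam (k - i)))"
      unfolding conv_def using 3 by (simp add: sum.insert)
    also have "\<dots> = 2 * gam k" using gam_ge2[OF 3] by simp
    finally show ?thesis using 3 by simp
  qed
qed

lemma gam_partial_le: "(\<Sum>i<n. gam i) \<le> 1"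
proof (induction n rule: less_induct)
  case (less n)
  show ?case
  proof (cases "n \<le> 1")
    case True
    then have "n = 0 \<or> n = 1" by auto
    then show ?thesis by auto
  next
    case False
    define m where "m = n - 1"
    have mn: "m < n" using False by (simp add: m_def)
    have IH: "(\<Sum>i<m. gam i) \<le> 1" using less.IH[OF mn] .
    have A: "(\<Sum>k<n. conv k) = (\<Sum>(i,j)\<in>{(i,j). i + j < n}. gam i * gam j)"
      unfolding conv_def by (rule sum.triangle_reindex[symmetric])
    have fin: "finite {(i,j). i + j < (n::nat)}"
      by (rule finite_subset[of _ "{..<n} \<times> {..<n}"]) auto
    have B: "(\<Sum>(i,j)\<in>{(i,j). i + j < n}. gam i * gam j) =
             (\<Sum>(i,j)\<in>{(i,j). i + j < n \<and> i \<ge> 1 \<and> j \<ge> 1}. gam i * gam j)"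
      by (rule sum.mono_neutral_right[OF fin]) (auto simp: Suc_le_eq intro: Nat.gr0I)
    have C: "(\<Sum>(i,j)\<in>{(i,j). i + j < n \<and> i \<ge> 1 \<and> j \<ge> 1}. gam i * gam j) \<le>
             (\<Sum>(i,j)\<in>{..<m} \<times> {..<m}. gam i * gam j)"
      by (rule sum_mono2) (auto simp: m_def gam_nonneg)
    have D: "(\<Sum>(i,j)\<in>{..<m} \<times> {..<m}. gam i * gam j) = (\<Sum>i<m. gam i) * (\<Sum>i<m. gam i)"
      by (simp add: sum_product sum.cartesian_product)
    have E: "(\<Sum>k<n. conv k) = 2 * (\<Sum>k<n. gam k) - 1"
    proof -
      have "(\<Sum>k<n. conv k) = (\<Sum>k<n. 2 * gam k) - (\<Sum>k<n. (if k = 1 then 1 else 0))"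
        by (simp add: conv_eq sum_subtractf)
      also have "(\<Sum>k<n. (if k = (1::nat) then 1 else 0::real)) = 1"
        using False by (simp add: sum.delta)
      finally show ?thesis by (simp add: sum_distrib_left)
    qed
    have nn: "0 \<le> (\<Sum>i<m. gam i)" by (simp add: sum_nonneg gam_nonneg)
    have "(\<Sum>i<m. gam i) * (\<Sum>i<m. gam i) \<le> 1 * 1" using IH nn by (intro mult_mono) auto
    then show ?thesis using A B C D E by linarith
  qed
qed

lemma gam_summable: "summable gam"
  by (rule summableI_nonneg_bounded[where x=1]) (simp_all add: gam_nonneg gam_partial_le)

lemma gam_suminf_le: "suminf gam \<le> 1"
  by (rule suminf_le_const[OF gam_summable]) (simp add: gam_partial_le)

lemma bounded_linear_cinner_left: "bounded_linear (\<lambda>v. cinner v (y::'a::chilbert))"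
proof (rule bounded_linear_intro[where K="norm y"])
  show "cinner (a + b) y = cinner a y + cinner b y" for a b by (rule cinner_add_left)
  show "cinner (r *\<^sub>R a) y = r *\<^sub>R cinner a y" for r a by (simp add: cinner_scaleR_left scaleR_conv_of_real)
  show "norm (cinner a y) \<le> norm a * norm y" for a by (rule Cauchy_Schwarz)
qed

lemma bounded_linear_cinner_right: "bounded_linear (\<lambda>v. cinner (x::'a::chilbert) v)"
proof (rule bounded_linear_intro[where K="norm x"])
  show "cinner x (a + b) = cinner x a + cinner x b" for a b by (rule cinner_add_right)
  show "cinner x (r *\<^sub>R a) = r *\<^sub>R cinner x a" for r a by (simp add: cinner_scaleR_right scaleR_conv_of_real)
  show "norm (cinner x a) \<le> norm a * norm x" for a using Cauchy_Schwarz[of x a] by (simp add: mult.commute)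
qed

lemma bl_scaleR: "bounded_linear B \<Longrightarrow> B (r *\<^sub>R x) = r *\<^sub>R B x"
  by (rule linear_cmul[OF bounded_linear.linear])

section \<open>Square root of a positive operator via the binomial series\<close>

locale sa_op =
  fixes c :: "'h::chilbert \<Rightarrow> 'h" and K :: real
  assumes c_bcl: "bounded_clinear c" and c_sa: "selfadj c" and K_pos: "K > 0"
    and c_bound: "\<And>x. norm (c x) \<le> K * norm x"
begin

definition kk :: real where "kk = inverse (K\<^sup>2)"

definition T :: "'h \<Rightarrow> 'h" where "T x = x - complex_of_real kk *\<^sub>C c (c x)"

lemma kk_pos: "kk > 0" using K_pos by (simp add: kk_def)
lemma kk_K: "kk * K\<^sup>2 = 1" using K_pos by (simp add: kk_def)

lemma T_bcl: "bounded_clinear T"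
proof -
  have "bounded_clinear (\<lambda>v. id v - (\<lambda>v. complex_of_real kk *\<^sub>C (c \<circ> c) v) v)"
    by (intro bcl_minus_fun bcl_id bcl_scale bcl_comp c_bcl)
  then show ?thesis by (simp add: T_def[abs_def])
qed

lemma T_bl: "bounded_linear T" by (rule bcl_bounded_linear[OF T_bcl])

lemma T_norm: "norm (T x) \<le> norm x"
proof -
  have cc: "cinner x (c (c x)) = complex_of_real ((norm (c x))\<^sup>2)"
    using selfadj_D[OF c_sa, of x "c x"] by (simp add: cinner_self)
  have b: "norm (c (c x)) \<le> K * norm (c x)" by (rule c_bound)
  then have b2: "(norm (c (c x)))\<^sup>2 \<le> K\<^sup>2 * (norm (c x))\<^sup>2"
    by (metis norm_ge_zero power_mono power_mult_distrib)
  have "(norm (T x))\<^sup>2 = (norm x)\<^sup>2 + (cmod (complex_of_real kk))\<^sup>2 * (norm (c (c x)))\<^sup>2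
      - 2 * Re (cinner x (complex_of_real kk *\<^sub>C c (c x)))"
    unfolding T_def by (simp add: norm_diff_sq norm_scaleC_sq)
  also have "Re (cinner x (complex_of_real kk *\<^sub>C c (c x))) = kk * (norm (c x))\<^sup>2"
    by (simp add: cinner_scaleC_right cc)
  also have "(cmod (complex_of_real kk))\<^sup>2 = kk\<^sup>2" using kk_pos by simp
  finally have e: "(norm (T x))\<^sup>2 = (norm x)\<^sup>2 + kk\<^sup>2 * (norm (c (c x)))\<^sup>2 - 2 * (kk * (norm (c x))\<^sup>2)" .
  have "kk\<^sup>2 * (norm (c (c x)))\<^sup>2 \<le> kk\<^sup>2 * (K\<^sup>2 * (norm (c x))\<^sup>2)"
    using b2 by (intro mult_left_mono) auto
  also have "\<dots> = (kk * K\<^sup>2) * kk * (norm (c x))\<^sup>2" by (simp add: power2_eq_square algebra_simps)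
  also have "\<dots> = kk * (norm (c x))\<^sup>2" using kk_K by simp
  finally have "(norm (T x))\<^sup>2 \<le> (norm x)\<^sup>2 - kk * (norm (c x))\<^sup>2" using e by linarith
  also have "\<dots> \<le> (norm x)\<^sup>2" using kk_pos by simp
  finally show ?thesis by (rule power2_le_imp_le) simp
qed

lemma T_sa: "selfadj T"
  unfolding selfadj_def
proof (intro allI)
  fix x y
  have "cinner (c (c x)) y = cinner x (c (c y))"
    using selfadj_D[OF c_sa, of "c x" y] selfadj_D[OF c_sa, of x "c y"] by simp
  then show "cinner (T x) y = cinner x (T y)"
    by (simp add: T_def cinner_diff_left cinner_diff_right cinner_scaleC_left cinner_scaleC_right)
qed

definition Tb :: "'h bop" where "Tb = mkop T"

lemma app_Tb: "app Tb = T" by (simp add: Tb_def app_mkop[OF T_bl])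

lemma Tb_norm: "norm Tb \<le> 1"
  unfolding Tb_def by (rule norm_mkop_le[OF T_bl]) (simp_all add: T_norm)

definition ser :: "nat \<Rightarrow> 'h bop" where "ser n = gam n *\<^sub>R Tb ^ n"

lemma ser_norm: "norm (ser n) \<le> gam n"
proof -
  have "norm (ser n) = gam n * norm (Tb ^ n)" by (simp add: ser_def gam_nonneg)
  also have "\<dots> \<le> gam n * 1" by (intro mult_left_mono norm_power_bop_le Tb_norm gam_nonneg)
  finally show ?thesis by simp
qed

lemma ser_summable_norm: "summable (\<lambda>n. norm (ser n))"
  by (rule summable_comparison_test[OF _ gam_summable]) (simp add: ser_norm)

lemma ser_summable: "summable ser"
  by (rule summable_norm_cancel[OF ser_summable_norm])

definition Gb :: "'h bop" where "Gb = suminf ser"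

lemma Gb_norm: "norm Gb \<le> 1"
proof -
  have "norm Gb \<le> (\<Sum>n. norm (ser n))" unfolding Gb_def by (rule summable_norm[OF ser_summable_norm])
  also have "\<dots> \<le> suminf gam" by (rule suminf_le[OF ser_norm ser_summable_norm gam_summable])
  also have "\<dots> \<le> 1" by (rule gam_suminf_le)
  finally show ?thesis .
qed

lemma Gb_sq: "Gb * Gb = 2 *\<^sub>R Gb - Tb"
proof -
  have "Gb * Gb = (\<Sum>k. \<Sum>i\<le>k. ser i * ser (k - i))"
    unfolding Gb_def by (rule Cauchy_product[OF ser_summable_norm ser_summable_norm])
  also have "(\<lambda>k. \<Sum>i\<le>k. ser i * ser (k - i)) = (\<lambda>k. 2 *\<^sub>R ser k - (if k = 1 then Tb else 0))"
  proof
    fix k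
    have "(\<Sum>i\<le>k. ser i * ser (k - i)) = (\<Sum>i\<le>k. (gam i * gam (k - i)) *\<^sub>R Tb ^ k)"
    proof (rule sum.cong)
      fix i assume "i \<in> {..k}"
      then have "Tb ^ i * Tb ^ (k - i) = Tb ^ k" by (simp flip: power_add)
      then show "ser i * ser (k - i) = (gam i * gam (k - i)) *\<^sub>R Tb ^ k"
        by (simp add: ser_def)
    qed simp
    also have "\<dots> = conv k *\<^sub>R Tb ^ k" by (simp add: conv_def scaleR_sum_left)
    also have "\<dots> = 2 *\<^sub>R ser k - (if k = 1 then Tb else 0)"
      by (simp add: conv_eq ser_def scaleR_diff_left)
    finally show "(\<Sum>i\<le>k. ser i * ser (k - i)) = 2 *\<^sub>R ser k - (if k = 1 then Tb else 0)" .
  qed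
  also have "(\<Sum>k. 2 *\<^sub>R ser k - (if k = 1 then Tb else 0)) =
      (\<Sum>k. 2 *\<^sub>R ser k) - (\<Sum>k. (if k = 1 then Tb else 0))"
  proof (rule suminf_diff[symmetric])
    show "summable (\<lambda>k. 2 *\<^sub>R ser k)" by (intro summable_scaleR_right ser_summable)
    show "summable (\<lambda>k. if k = 1 then Tb else 0)" using sums_single[of 1 "\<lambda>_. Tb"] by (simp add: sums_iff)
  qed
  also have "(\<Sum>k. 2 *\<^sub>R ser k) = 2 *\<^sub>R Gb" unfolding Gb_def by (rule suminf_scaleR_right[OF ser_summable, symmetric])
  also have "(\<Sum>k. (if k = 1 then Tb else 0)) = Tb" using sums_single[of 1 "\<lambda>_. Tb"] by (simp add: sums_iff)
  finally show ?thesis .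
qed

definition Rb :: "'h bop" where "Rb = 1 - Gb"

lemma Rb_sq: "Rb * Rb = 1 - Tb"
proof -
  have "Rb * Rb = 1 - Gb - Gb + Gb * Gb" by (simp add: Rb_def algebra_simps)
  also have "\<dots> = 1 - Tb" by (simp add: Gb_sq scaleR_2)
  finally show ?thesis .
qed

lemma app_power_commute:
  assumes "\<And>x. B (T x) = T (B x)"
  shows "app (Tb ^ n) (B x) = B (app (Tb ^ n) x)"
  by (induction n arbitrary: x) (simp_all add: app_Tb assms)

lemma app_Gb: "app Gb x = (\<Sum>n. app (ser n) x)"
  unfolding Gb_def by (rule app_suminf[OF ser_summable])

lemma app_Gb_summable: "summable (\<lambda>n. app (ser n) x)"
  by (rule app_summable[OF ser_summable])

lemma Gb_commute:
  assumes B: "bounded_linear B" and BT: "\<And>x. B (T x) = T (B x)"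
  shows "app Gb (B x) = B (app Gb x)"
proof -
  have "app Gb (B x) = (\<Sum>n. app (ser n) (B x))" by (rule app_Gb)
  also have "\<dots> = (\<Sum>n. B (app (ser n) x))"
    by (simp add: ser_def app_power_commute[where B=B, OF BT] bl_scaleR[OF B])
  also have "\<dots> = B (\<Sum>n. app (ser n) x)"
    by (rule bounded_linear.suminf[OF B app_Gb_summable, symmetric])
  also have "\<dots> = B (app Gb x)" by (simp add: app_Gb)
  finally show ?thesis .
qed

lemma power_sa: "cinner (app (Tb ^ n) x) y = cinner x (app (Tb ^ n) y)"
proof (induction n arbitrary: x y)
  case 0 then show ?case by simp
next
  case (Suc n)
  have comm: "app (Tb ^ n) (T y) = T (app (Tb ^ n) y)" for y
    by (rule app_power_commute) simp
  have "cinner (app (Tb ^ Suc n) x) y = cinner (T (app (Tb ^ n) x)) y" by (simp add: app_Tb)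
  also have "\<dots> = cinner (app (Tb ^ n) x) (T y)" by (rule selfadj_D[OF T_sa])
  also have "\<dots> = cinner x (app (Tb ^ n) (T y))" by (rule Suc.IH)
  also have "\<dots> = cinner x (app (Tb ^ Suc n) y)" by (simp add: comm app_Tb)
  finally show ?case .
qed

lemma Gb_sa: "cinner (app Gb x) y = cinner x (app Gb y)"
proof -
  have "cinner (app Gb x) y = (\<Sum>n. cinner (app (ser n) x) y)"
    unfolding app_Gb by (rule bounded_linear.suminf[OF bounded_linear_cinner_left app_Gb_summable])
  also have "\<dots> = (\<Sum>n. cinner x (app (ser n) y))"
    by (simp add: ser_def cinner_scaleR_left cinner_scaleR_right power_sa)
  also have "\<dots> = cinner x (app Gb y)"
    unfolding app_Gb by (rule bounded_linear.suminf[OF bounded_linear_cinner_right app_Gb_summable, symmetric])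
  finally show ?thesis .
qed

definition absc :: "'h \<Rightarrow> 'h" where "absc x = K *\<^sub>R (x - app Gb x)"

lemma T_scaleC: "T (a *\<^sub>C x) = a *\<^sub>C T x" by (rule bcl_scaleC[OF T_bcl])

lemma Gb_scaleC: "app Gb (a *\<^sub>C x) = a *\<^sub>C app Gb x"
  using Gb_commute[OF bounded_linear_scaleC, of a x] T_scaleC by simp

lemma Gb_bcl: "bounded_clinear (app Gb)"
proof (rule bcl_intro[where K=1])
  show "app Gb (x + y) = app Gb x + app Gb y" for x y by (rule app_linear_add)
  show "app Gb (a *\<^sub>C x) = a *\<^sub>C app Gb x" for a x by (rule Gb_scaleC)
  show "norm (app Gb x) \<le> norm x * 1" for x
  proof -
    have "norm (app Gb x) \<le> norm Gb * norm x" by (rule app_norm)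
    also have "\<dots> \<le> 1 * norm x" by (intro mult_right_mono Gb_norm) simp
    finally show ?thesis by simp
  qed
qed

lemma absc_bcl: "bounded_clinear absc"
proof -
  have "bounded_clinear (\<lambda>v. complex_of_real K *\<^sub>C (id v - app Gb v))"
    by (intro bcl_scale bcl_minus_fun bcl_id Gb_bcl)
  then show ?thesis by (simp add: absc_def[abs_def] scaleR_scaleC)
qed

lemma absc_sq: "absc (absc x) = c (c x)"
proof -
  have R: "app Rb y = y - app Gb y" for y by (simp add: Rb_def)
  have "absc (absc x) = K *\<^sub>R app Rb (K *\<^sub>R app Rb x)" by (simp add: absc_def R)
  also have "\<dots> = (K * K) *\<^sub>R app (Rb * Rb) x" by (simp add: app_linear_scaleR)
  also have "app (Rb * Rb) x = x - T x" by (simp add: Rb_sq app_Tb)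
  also have "x - T x = kk *\<^sub>R c (c x)" by (simp add: T_def scaleR_scaleC)
  also have "(K * K) *\<^sub>R (kk *\<^sub>R c (c x)) = (kk * K\<^sup>2) *\<^sub>R c (c x)" by (simp add: power2_eq_square mult.commute)
  finally show ?thesis by (simp add: kk_K)
qed

lemma absc_commute:
  assumes B: "bounded_clinear B" and Bc: "\<And>x. B (c x) = c (B x)"
  shows "B (absc x) = absc (B x)"
proof -
  have BT: "B (T y) = T (B y)" for y by (simp add: T_def bcl_diff[OF B] bcl_scaleC[OF B] Bc)
  have "app Gb (B x) = B (app Gb x)" by (rule Gb_commute[OF bcl_bounded_linear[OF B] BT])
  then show ?thesis by (simp add: absc_def bcl_scaleR[OF B] bcl_diff[OF B])
qed

lemma absc_c: "absc (c x) = c (absc x)"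
  using absc_commute[OF c_bcl] by simp

lemma absc_sa: "selfadj absc"
  unfolding selfadj_def
  by (simp add: absc_def cinner_scaleR_left cinner_scaleR_right cinner_diff_left cinner_diff_right Gb_sa)

lemma absc_pos: "Re (cinner (absc x) x) \<ge> 0"
proof -
  have "Re (cinner (app Gb x) x) \<le> cmod (cinner (app Gb x) x)" by (rule complex_Re_le_cmod)
  also have "\<dots> \<le> norm (app Gb x) * norm x" by (rule Cauchy_Schwarz)
  also have "\<dots> \<le> (norm Gb * norm x) * norm x" by (intro mult_right_mono app_norm) simp
  also have "\<dots> \<le> (1 * norm x) * norm x" by (intro mult_right_mono Gb_norm) simp_all
  finally have "Re (cinner (app Gb x) x) \<le> (norm x)\<^sup>2" by (simp add: power2_eq_square)
  then show ?thesis using K_pos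
    by (simp add: absc_def cinner_scaleR_left cinner_diff_left cinner_self_Re)
qed

end

section \<open>Inverse of a strictly positive operator\<close>

lemma pos_inverse:
  fixes D :: "'h::chilbert \<Rightarrow> 'h"
  assumes D: "bounded_clinear D" and pos: "\<And>x. Re (cinner (D x) x) \<ge> (norm x)\<^sup>2"
  shows "\<exists>E. bounded_clinear E \<and> (\<forall>y. D (E y) = y) \<and> (\<forall>x. E (D x) = x) \<and>
    (\<forall>B. bounded_clinear B \<longrightarrow> (\<forall>x. B (D x) = D (B x)) \<longrightarrow> (\<forall>x. B (E x) = E (B x)))"
proof -
  have lower: "norm x \<le> norm (D x)" for x
  proof (cases "x = 0")
    case True then show ?thesis by simp
  next
    case False
    have "(norm x)\<^sup>2 \<le> Re (cinner (D x) x)" by (rule pos)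
    also have "\<dots> \<le> cmod (cinner (D x) x)" by (rule complex_Re_le_cmod)
    also have "\<dots> \<le> norm (D x) * norm x" by (rule Cauchy_Schwarz)
    finally have "norm x * norm x \<le> norm (D x) * norm x" by (simp add: power2_eq_square)
    then show ?thesis using False by simp
  qed
  have inj: "inj D"
  proof (rule injI)
    fix x y assume "D x = D y"
    then have "D (x - y) = 0" by (simp add: bcl_diff[OF D])
    then have "norm (x - y) \<le> 0" using lower[of "x - y"] by simp
    then show "x = y" by simp
  qed
  define W where "W = range D"
  have sub: "csubspace W" unfolding csubspace_def W_def
  proof (intro conjI ballI allI)
    show "0 \<in> range D" using bcl_zero[OF D] rangeI[of D 0] by simp
    fix u v assume "u \<in> range D" "v \<in> range D"
    then obtain a b where "u = D a" "v = D b" by blast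
    then show "u + v \<in> range D" using bcl_add[OF D, of a b] rangeI[of D "a + b"] by simp
  next
    fix z u assume "u \<in> range D"
    then obtain a where "u = D a" by blast
    then show "z *\<^sub>C u \<in> range D" using bcl_scaleC[OF D, of z a] rangeI[of D "z *\<^sub>C a"] by simp
  qed
  have clo: "closed W"
    unfolding closed_sequential_limits
  proof (intro allI impI)
    fix f l assume h: "(\<forall>n. f n \<in> W) \<and> f \<longlonglongrightarrow> l"
    then have "\<forall>n. \<exists>a. f n = D a" by (auto simp: W_def)
    then obtain g where g: "\<And>n. f n = D (g n)" by (metis)
    have "Cauchy f" using h by (auto intro: LIMSEQ_imp_Cauchy)
    have "Cauchy g"
    proof (rule metric_CauchyI)
      fix e :: real assume "e > 0"
      then obtain M where M: "\<forall>m\<ge>M. \<forall>n\<ge>M. dist (f m) (f n) < e"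
        using \<open>Cauchy f\<close> metric_CauchyD by blast
      have "dist (g m) (g n) \<le> dist (f m) (f n)" for m n
        using lower[of "g m - g n"] by (simp add: dist_norm g bcl_diff[OF D])
      then show "\<exists>M. \<forall>m\<ge>M. \<forall>n\<ge>M. dist (g m) (g n) < e" using M by (blast intro: le_less_trans)
    qed
    then obtain x where x: "g \<longlonglongrightarrow> x" using Cauchy_convergent_iff convergent_def by blast
    have "(\<lambda>n. D (g n)) \<longlonglongrightarrow> D x" by (rule bcl_tendsto[OF D x])
    moreover have "f = (\<lambda>n. D (g n))" by (rule ext) (rule g)
    ultimately have "f \<longlonglongrightarrow> D x" by simp
    then have "l = D x" using h LIMSEQ_unique by blast
    then show "l \<in> W" by (simp add: W_def)
  qed
  interpret W: closed_csubspace W using sub clo by unfold_locales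
  have surj: "surj D"
  proof -
    have "y \<in> W" for y
    proof -
      define z where "z = y - proj W y"
      have "cinner (D z) z = 0" unfolding z_def by (rule W.proj_orth) (simp add: W_def)
      then have "(norm z)\<^sup>2 \<le> 0" using pos[of z] by simp
      then have "z = 0" by simp
      then have "y = proj W y" by (simp add: z_def)
      then show ?thesis using W.proj_in[of y] by simp
    qed
    then show ?thesis by (auto simp: W_def)
  qed
  define E where "E = inv D"
  have DE: "D (E y) = y" for y unfolding E_def by (rule surj_f_inv_f[OF surj])
  have ED: "E (D x) = x" for x unfolding E_def by (rule inv_f_f[OF inj])
  have E_add: "E (a + b) = E a + E b" for a b
  proof -
    have "D (E a + E b) = a + b" by (simp add: bcl_add[OF D] DE)
    then show ?thesis using ED[of "E a + E b"] by simp
  qed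
  have E_sc: "E (s *\<^sub>C a) = s *\<^sub>C E a" for s a
  proof -
    have "D (s *\<^sub>C E a) = s *\<^sub>C a" by (simp add: bcl_scaleC[OF D] DE)
    then show ?thesis using ED[of "s *\<^sub>C E a"] by simp
  qed
  have E_norm: "norm (E y) \<le> norm y * 1" for y using lower[of "E y"] by (simp add: DE)
  have Ebcl: "bounded_clinear E" by (rule bcl_intro[OF E_add E_sc E_norm])
  have comm: "B (E x) = E (B x)" if B: "bounded_clinear B" and BD: "\<forall>x. B (D x) = D (B x)" for B x
  proof -
    have "D (B (E x)) = B (D (E x))" using BD by simp
    then have "D (B (E x)) = B x" by (simp add: DE)
    then show ?thesis using ED[of "B (E x)"] by simp
  qed
  show ?thesis using Ebcl DE ED comm by blast
qed

section \<open>Projection onto the orthogonal complement of the kernel\<close>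

definition kerperp :: "('h::chilbert \<Rightarrow> 'h) \<Rightarrow> 'h set" where
  "kerperp X = {v. \<forall>w. X w = 0 \<longrightarrow> cinner w v = 0}"

lemma kerperp_csubspace: "csubspace (kerperp X)"
  unfolding csubspace_def kerperp_def by (simp add: cinner_add_right cinner_scaleC_right)

lemma kerperp_closed: "closed (kerperp (X::'h::chilbert \<Rightarrow> 'h))"
proof -
  have e: "kerperp X = (\<Inter>w\<in>{w. X w = 0}. {v. cinner w v = 0})" by (auto simp: kerperp_def)
  have "closed {v. cinner w v = 0}" for w :: 'h
  proof -
    have "continuous_on UNIV (\<lambda>v. cinner w v)" by (rule linear_continuous_on[OF bounded_linear_cinner_right])
    then show ?thesis using closed_Collect_eq[of "\<lambda>v. cinner w v" "\<lambda>v. 0"] by (simp add: continuous_on_const)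
  qed
  then show ?thesis unfolding e by (intro closed_INT) blast
qed

locale rproj =
  fixes X :: "'h::chilbert \<Rightarrow> 'h"
  assumes X_bcl: "bounded_clinear X" and X_sa: "selfadj X"
begin

sublocale V: closed_csubspace "kerperp X"
  by unfold_locales (rule kerperp_csubspace, rule kerperp_closed)

abbreviation P where "P \<equiv> proj (kerperp X)"

lemma range_in: "X z \<in> kerperp X"
  unfolding kerperp_def
proof (intro CollectI allI impI)
  fix w assume "X w = 0"
  have "cinner (X w) z = cinner w (X z)" by (rule selfadj_D[OF X_sa])
  then show "cinner w (X z) = 0" using \<open>X w = 0\<close> by simp
qed

lemma P_range: "P (X z) = X z"
  by (rule V.proj_fix[OF range_in])

lemma P_kernel: "X u = 0 \<Longrightarrow> P u = 0"
proof (rule V.proj_orth_zero)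
  fix v assume X0: "X u = 0" and v: "v \<in> kerperp X"
  then have "cinner u v = 0" by (simp add: kerperp_def)
  moreover have "cinner v u = cnj (cinner u v)" by (rule cinner_commute)
  ultimately show "cinner v u = 0" by simp
qed

lemma resid_kernel: "X (u - P u) = 0"
proof -
  define d where "d = u - P u"
  have "cinner (X (X d)) d = 0" unfolding d_def by (rule V.proj_orth[OF range_in])
  moreover have "cinner (X (X d)) d = cinner (X d) (X d)" by (rule selfadj_D[OF X_sa])
  ultimately have "X d = 0" by simp
  then show ?thesis by (simp add: d_def)
qed

lemma P_commute:
  assumes B: "bounded_clinear B" and BX: "\<And>x. B (X x) = X (B x)"
  shows "P (B u) = B (P u)"
proof -
  define Ba where "Ba = adjoint B"
  have adj: "cinner (B x) y = cinner x (Ba y)" for x y unfolding Ba_def by (rule adjoint_prop[OF B])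
  have Ba0: "Ba 0 = 0" by (rule cinner_ext) (simp flip: adj)
  have BaX: "Ba (X y) = X (Ba y)" for y
  proof (rule cinner_ext)
    fix z
    have "cinner z (Ba (X y)) = cinner (B z) (X y)" by (simp add: adj)
    also have "\<dots> = cinner (X (B z)) y" by (simp add: selfadj_D[OF X_sa])
    also have "\<dots> = cinner (B (X z)) y" by (simp add: BX)
    also have "\<dots> = cinner (X z) (Ba y)" by (simp add: adj)
    also have "\<dots> = cinner z (X (Ba y))" by (simp add: selfadj_D[OF X_sa])
    finally show "cinner z (Ba (X y)) = cinner z (X (Ba y))" .
  qed
  have BV: "B v \<in> kerperp X" if v: "v \<in> kerperp X" for v
    unfolding kerperp_def
  proof (intro CollectI allI impI)
    fix w assume w: "X w = 0"
    then have "X (Ba w) = 0" using BaX[of w] Ba0 by simp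
    then have "cinner (Ba w) v = 0" using v by (simp add: kerperp_def)
    moreover have "cinner w (B v) = cnj (cinner (B v) w)" by (rule cinner_commute)
    moreover have "cinner (B v) w = cinner v (Ba w)" by (rule adj)
    moreover have "cinner v (Ba w) = cnj (cinner (Ba w) v)" by (rule cinner_commute)
    ultimately show "cinner w (B v) = 0" by simp
  qed
  have "B u = B (P u) + B (u - P u)" by (simp add: bcl_add[OF B, symmetric])
  then have "P (B u) = P (B (P u)) + P (B (u - P u))" by (simp add: V.proj_add)
  also have "P (B (P u)) = B (P u)" by (rule V.proj_fix[OF BV[OF V.proj_in]])
  also have "P (B (u - P u)) = 0"
    by (rule P_kernel) (simp add: BX[symmetric] resid_kernel bcl_zero[OF B])
  finally show ?thesis by simp
qed

end

locale main_setup =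
  fixes S :: "('h::chilbert \<Rightarrow> 'h) set"
    and \<pi> :: "('h \<Rightarrow> 'h) \<Rightarrow> 'm::cstar_alg"
    and \<phi> :: "cc \<Rightarrow> 'm"
  assumes vn: "von_neumann_algebra S"
    and hom: "unital_star_hom_on_ops S \<pi>"
    and surj: "\<pi> ` S = UNIV"
    and phi: "unital_star_hom \<phi>"
begin

lemma S_bcl: "A \<in> S \<Longrightarrow> bounded_clinear A" using vn by (simp add: von_neumann_algebra_def)
lemma S_id: "id \<in> S" using vn by (simp add: von_neumann_algebra_def)
lemma S_idl: "(\<lambda>v. v) \<in> S" using S_id by (simp add: id_def)
lemma S_add: "A \<in> S \<Longrightarrow> B \<in> S \<Longrightarrow> (\<lambda>v. A v + B v) \<in> S" using vn by (simp add: von_neumann_algebra_def)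
lemma S_scale: "A \<in> S \<Longrightarrow> (\<lambda>v. a *\<^sub>C A v) \<in> S" using vn by (simp add: von_neumann_algebra_def)
lemma S_comp: "A \<in> S \<Longrightarrow> B \<in> S \<Longrightarrow> A \<circ> B \<in> S" using vn by (simp add: von_neumann_algebra_def)
lemma S_compl: "A \<in> S \<Longrightarrow> B \<in> S \<Longrightarrow> (\<lambda>v. A (B v)) \<in> S" using S_comp by (simp add: comp_def)
lemma S_adj: "A \<in> S \<Longrightarrow> adjoint A \<in> S" using vn by (simp add: von_neumann_algebra_def)
lemma S_bicomm:
  assumes "bounded_clinear T" "\<And>B x. B \<in> commutant S \<Longrightarrow> B (T x) = T (B x)"
  shows "T \<in> S"
proof -
  have "T \<in> commutant (commutant S)" unfolding commutant_def[of "commutant S"]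
    using assms by (auto simp: fun_eq_iff)
  then show ?thesis using vn by (simp add: von_neumann_algebra_def)
qed
lemma comm_bcl: "B \<in> commutant S \<Longrightarrow> bounded_clinear B" by (simp add: commutant_def)
lemma comm_S: "B \<in> commutant S \<Longrightarrow> A \<in> S \<Longrightarrow> B (A x) = A (B x)"
  by (simp add: commutant_def fun_eq_iff)

lemma S_diff: "A \<in> S \<Longrightarrow> B \<in> S \<Longrightarrow> (\<lambda>v. A v - B v) \<in> S"
proof -
  assume "A \<in> S" "B \<in> S"
  then have "(\<lambda>v. A v + (\<lambda>v. (-1) *\<^sub>C B v) v) \<in> S" by (intro S_add S_scale)
  then show ?thesis by (simp add: scaleC_neg1)
qed

lemma pi_add: "A \<in> S \<Longrightarrow> B \<in> S \<Longrightarrow> \<pi> (\<lambda>v. A v + B v) = \<pi> A + \<pi> B"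
  using hom by (simp add: unital_star_hom_on_ops_def)
lemma pi_scale: "A \<in> S \<Longrightarrow> \<pi> (\<lambda>v. a *\<^sub>C A v) = a *\<^sub>C \<pi> A"
  using hom by (simp add: unital_star_hom_on_ops_def)
lemma pi_comp: "A \<in> S \<Longrightarrow> B \<in> S \<Longrightarrow> \<pi> (A \<circ> B) = \<pi> A * \<pi> B"
  using hom by (simp add: unital_star_hom_on_ops_def)
lemma pi_compl: "A \<in> S \<Longrightarrow> B \<in> S \<Longrightarrow> \<pi> (\<lambda>v. A (B v)) = \<pi> A * \<pi> B"
  using pi_comp by (simp add: comp_def)
lemma pi_adj: "A \<in> S \<Longrightarrow> \<pi> (adjoint A) = cstar (\<pi> A)"
  using hom by (simp add: unital_star_hom_on_ops_def)
lemma pi_id: "\<pi> id = 1"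
  using hom by (simp add: unital_star_hom_on_ops_def)
lemma pi_idl: "\<pi> (\<lambda>v. v) = 1"
  using pi_id by (simp add: id_def)
lemma pi_diff: "A \<in> S \<Longrightarrow> B \<in> S \<Longrightarrow> \<pi> (\<lambda>v. A v - B v) = \<pi> A - \<pi> B"
proof -
  assume A: "A \<in> S" and B: "B \<in> S"
  have "\<pi> (\<lambda>v. A v + (\<lambda>v. (-1) *\<^sub>C B v) v) = \<pi> A + \<pi> (\<lambda>v. (-1) *\<^sub>C B v)"
    using A B by (intro pi_add S_scale)
  also have "\<pi> (\<lambda>v. (-1) *\<^sub>C B v) = - \<pi> B" using pi_scale[OF B, of "-1"] by (simp add: scaleC_neg1)
  finally show ?thesis by (simp add: scaleC_neg1)
qed
lemma S_zero: "(\<lambda>v. 0) \<in> S"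
  using S_scale[OF S_idl, of 0] by simp
lemma pi_zero: "\<pi> (\<lambda>v. 0) = 0"
  using pi_scale[OF S_idl, of 0] by simp

lemma phi_add: "\<phi> (x + y) = \<phi> x + \<phi> y" using phi by (simp add: unital_star_hom_def)
lemma phi_scale: "\<phi> (a *\<^sub>C x) = a *\<^sub>C \<phi> x" using phi by (simp add: unital_star_hom_def)
lemma phi_mult: "\<phi> (x * y) = \<phi> x * \<phi> y" using phi by (simp add: unital_star_hom_def)
lemma phi_star: "\<phi> (cstar x) = cstar (\<phi> x)" using phi by (simp add: unital_star_hom_def)
lemma phi_one: "\<phi> 1 = 1" using phi by (simp add: unital_star_hom_def)

definition e1 :: cc where "e1 = CC 1 0"
definition p :: 'm where "p = \<phi> e1"

lemma p_idem: "p * p = p"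
proof -
  have "e1 * e1 = e1" by (simp add: e1_def cc_eq_iff)
  then show ?thesis by (metis p_def phi_mult)
qed

lemma p_star: "cstar p = p"
proof -
  have "cstar e1 = e1" by (simp add: e1_def cstar_cc_def)
  then show ?thesis by (metis p_def phi_star)
qed

lemma phi_formula: "\<phi> z = cc1 z *\<^sub>C p + cc2 z *\<^sub>C (1 - p)"
proof -
  have z: "z = cc1 z *\<^sub>C e1 + cc2 z *\<^sub>C (1 - e1)"
    by (simp add: cc_eq_iff e1_def scaleC_cc_def)
  have m: "\<phi> (1 - e1) = 1 - p"
  proof -
    have "\<phi> (1 - e1) + \<phi> e1 = \<phi> 1" by (simp flip: phi_add)
    then show ?thesis by (simp add: p_def phi_one eq_diff_eq)
  qed
  have "\<phi> z = \<phi> (cc1 z *\<^sub>C e1 + cc2 z *\<^sub>C (1 - e1))" using z by simp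
  also have "\<dots> = cc1 z *\<^sub>C p + cc2 z *\<^sub>C (1 - p)" by (simp add: phi_add phi_scale m p_def)
  finally show ?thesis .
qed

end

context main_setup
begin

lemma halve:
  fixes x y :: "'a::complex_vector_c"
  assumes "x + x = y + y" shows "x = y"
proof -
  have "(2::complex) *\<^sub>C x = (2::complex) *\<^sub>C y" using assms by (simp add: scaleC_2)
  then have "(1/2::complex) *\<^sub>C ((2::complex) *\<^sub>C x) = (1/2::complex) *\<^sub>C ((2::complex) *\<^sub>C y)" by simp
  then show ?thesis by (simp add: scaleC_scaleC scaleC_one)
qed

lemma proj_lift: "\<exists>P. P \<in> S \<and> selfadj P \<and> (\<forall>v. P (P v) = P v) \<and> \<pi> P = p"
proof -
  have "p \<in> \<pi> ` S" using surj by simp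
  then obtain a where aS: "a \<in> S" and pa0: "p = \<pi> a" by (rule imageE)
  have pa: "\<pi> a = p" using pa0 by simp
  define ad where "ad = adjoint a"
  have adS: "ad \<in> S" unfolding ad_def by (rule S_adj[OF aS])
  have pad: "\<pi> ad = p" unfolding ad_def by (simp add: pi_adj[OF aS] pa p_star)
  have a_bcl: "bounded_clinear a" by (rule S_bcl[OF aS])
  have adj1: "cinner (a x) y = cinner x (ad y)" for x y unfolding ad_def by (rule adjoint_prop[OF a_bcl])
  have adj2: "cinner (ad x) y = cinner x (a y)" for x y
  proof -
    have "cinner (ad x) y = cnj (cinner y (ad x))" by (rule cinner_commute)
    also have "\<dots> = cnj (cinner (a y) x)" by (simp add: adj1)
    also have "\<dots> = cinner x (a y)" by (rule cinner_commute[symmetric])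
    finally show ?thesis .
  qed
  define c where "c = (\<lambda>v. a v + ad v - v)"
  have cS: "c \<in> S" unfolding c_def by (intro S_diff S_add aS adS S_idl)
  have pc: "\<pi> c = p + p - 1" unfolding c_def
    by (simp add: pi_diff[OF S_add[OF aS adS] S_idl] pi_add[OF aS adS] pi_idl pa pad)
  have c_bcl: "bounded_clinear c" by (rule S_bcl[OF cS])
  have c_sa: "selfadj c" unfolding selfadj_def
    by (simp add: c_def cinner_diff_left cinner_diff_right cinner_add_left cinner_add_right adj1 adj2)
  obtain K where K: "K > 0" "\<forall>x. norm (c x) \<le> norm x * K" using bcl_bound[OF c_bcl] by blast
  have Kb: "norm (c x) \<le> K * norm x" for x using K(2) by (simp add: mult.commute)
  interpret sa: sa_op c K
    by unfold_locales (rule c_bcl, rule c_sa, rule K(1), rule Kb)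
  have abS: "sa.absc \<in> S"
  proof (rule S_bicomm[OF sa.absc_bcl])
    fix B x assume B: "B \<in> commutant S"
    show "B (sa.absc x) = sa.absc (B x)"
      by (rule sa.absc_commute[OF comm_bcl[OF B]]) (rule comm_S[OF B cS])
  qed
  have ab_add: "sa.absc (x + y) = sa.absc x + sa.absc y" for x y by (rule bcl_add[OF sa.absc_bcl])
  have ab_diff: "sa.absc (x - y) = sa.absc x - sa.absc y" for x y by (rule bcl_diff[OF sa.absc_bcl])
  have c_diff: "c (x - y) = c x - c y" for x y by (rule bcl_diff[OF c_bcl])
  define D where "D = (\<lambda>v. v + sa.absc v)"
  have DS: "D \<in> S" unfolding D_def by (intro S_add S_idl abS)
  have D_bcl: "bounded_clinear D" by (rule S_bcl[OF DS])
  have D_pos: "Re (cinner (D x) x) \<ge> (norm x)\<^sup>2" for x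
    using sa.absc_pos[of x] by (simp add: D_def cinner_add_left cinner_self_Re)
  obtain E where Eall: "bounded_clinear E \<and> (\<forall>y. D (E y) = y) \<and> (\<forall>x. E (D x) = x) \<and>
    (\<forall>B. bounded_clinear B \<longrightarrow> (\<forall>x. B (D x) = D (B x)) \<longrightarrow> (\<forall>x. B (E x) = E (B x)))"
    using pos_inverse[OF D_bcl D_pos] by (rule exE)
  note E = conjunct1[OF Eall] conjunct1[OF conjunct2[OF Eall]] conjunct1[OF conjunct2[OF conjunct2[OF Eall]]]
    conjunct2[OF conjunct2[OF conjunct2[OF Eall]]]
  have ES: "E \<in> S"
  proof (rule S_bicomm[OF E(1)])
    fix B x assume B: "B \<in> commutant S"
    have "\<forall>x. B (D x) = D (B x)" using comm_S[OF B DS] by blast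
    moreover have Bc: "bounded_clinear B" by (rule comm_bcl[OF B])
    moreover have "bounded_clinear B \<longrightarrow> (\<forall>x. B (D x) = D (B x)) \<longrightarrow> (\<forall>x. B (E x) = E (B x))"
      using spec[OF E(4), of B] .
    ultimately have "\<forall>x. B (E x) = E (B x)" by blast
    then show "B (E x) = E (B x)" by blast
  qed
  have ccS: "(\<lambda>v. c (c v) - v) \<in> S" using S_diff[OF S_compl[OF cS cS] S_idl] by simp
  have rel: "(\<lambda>v. sa.absc v - v) = (\<lambda>v. (\<lambda>v. c (c v) - v) (E v))"
  proof
    fix v
    define x where "x = E v"
    have v: "v = x + sa.absc x" using E(2)[rule_format, of v] by (simp add: x_def D_def)
    show "sa.absc v - v = (\<lambda>v. c (c v) - v) (E v)"
      unfolding x_def[symmetric] by (simp add: v ab_add sa.absc_sq)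
  qed
  have "\<pi> (\<lambda>v. sa.absc v - v) = \<pi> (\<lambda>v. c (c v) - v) * \<pi> E"
    unfolding rel by (rule pi_compl[OF ccS ES])
  also have "\<pi> (\<lambda>v. c (c v) - v) = \<pi> c * \<pi> c - 1"
    by (simp add: pi_diff[OF S_compl[OF cS cS] S_idl] pi_compl[OF cS cS] pi_idl)
  also have "\<pi> c * \<pi> c - 1 = 0"
  proof -
    have "(p + p - 1) * (p + p - 1) - 1 = (p * p + p * p + p * p + p * p) - (p + p + p + p)"
      by (simp add: algebra_simps)
    also have "\<dots> = 0" by (simp add: p_idem)
    finally show ?thesis by (simp add: pc)
  qed
  finally have "\<pi> (\<lambda>v. sa.absc v - v) = 0" by simp
  then have pab: "\<pi> sa.absc = 1" by (simp add: pi_diff[OF abS S_idl] pi_idl)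
  define X where "X = (\<lambda>v. sa.absc v + c v)"
  define Y where "Y = (\<lambda>v. sa.absc v - c v)"
  have XS: "X \<in> S" unfolding X_def by (intro S_add abS cS)
  have YS: "Y \<in> S" unfolding Y_def by (intro S_diff abS cS)
  have pX: "\<pi> X = p + p" unfolding X_def by (simp add: pi_add[OF abS cS] pab pc)
  have pY: "\<pi> Y = 1 - (p + p - 1)" unfolding Y_def by (simp add: pi_diff[OF abS cS] pab pc)
  have X_sa: "selfadj X" unfolding selfadj_def X_def
    by (simp add: cinner_add_left cinner_add_right selfadj_D[OF sa.absc_sa] selfadj_D[OF c_sa])
  have XY: "X (Y v) = 0" for v
    by (simp add: X_def Y_def ab_diff c_diff sa.absc_sq sa.absc_c)
  interpret rp: rproj X using S_bcl[OF XS] X_sa by unfold_locales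
  define P where "P = proj (kerperp X)"
  have P_bcl: "bounded_clinear P" unfolding P_def by (rule rp.V.proj_bcl)
  have PS: "P \<in> S"
  proof (rule S_bicomm[OF P_bcl])
    fix B x assume B: "B \<in> commutant S"
    show "B (P x) = P (B x)" unfolding P_def
      by (rule rp.P_commute[OF comm_bcl[OF B], symmetric]) (rule comm_S[OF B XS])
  qed
  have PX: "(\<lambda>v. P (X v)) = X" by (rule ext) (simp add: P_def rp.P_range)
  have PY: "(\<lambda>v. P (Y v)) = (\<lambda>v. 0)" by (rule ext) (simp add: P_def rp.P_kernel XY)
  have e1: "\<pi> P * (p + p) = p + p" using pi_compl[OF PS XS] by (simp add: PX pX)
  have e2: "\<pi> P * (1 - (p + p - 1)) = 0" using pi_compl[OF PS YS] by (simp add: PY pY pi_zero)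
  have f1: "\<pi> P * p = p"
    using e1 by (rule_tac halve) (simp add: distrib_left)
  have "\<pi> P * (1 - p) = 0"
  proof (rule halve)
    have "\<pi> P * (1 - p) + \<pi> P * (1 - p) = \<pi> P * (1 - (p + p - 1))" by (simp add: algebra_simps mult_2_right)
    then show "\<pi> P * (1 - p) + \<pi> P * (1 - p) = 0 + 0" using e2 by simp
  qed
  then have pP: "\<pi> P = p" using f1 by (simp add: algebra_simps)
  have P_sa: "selfadj P" unfolding selfadj_def P_def by (simp add: rp.V.proj_selfadj)
  have P_idem: "P (P v) = P v" for v unfolding P_def by (rule rp.V.proj_idem)
  show ?thesis using PS P_sa P_idem pP by blast
qed

end

theorem proposition4p1:
  fixes S :: "('h::chilbert \<Rightarrow> 'h) set"
    and \<pi> :: "('h \<Rightarrow> 'h) \<Rightarrow> 'm::cstar_alg"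
    and \<phi> :: "cc \<Rightarrow> 'm"
  assumes "von_neumann_algebra S"
    and "unital_star_hom_on_ops S \<pi>"
    and "\<pi> ` S = UNIV"
    and "unital_star_hom \<phi>"
  shows "\<exists>\<psi>. (\<forall>x. \<psi> x \<in> S) \<and> unital_star_hom_to_ops \<psi> \<and> (\<forall>x. \<pi> (\<psi> x) = \<phi> x)"
proof -
  interpret M: main_setup S \<pi> \<phi> using assms by unfold_locales
  obtain P where PS: "P \<in> S" and P_sa: "selfadj P" and P_idem: "\<And>v. P (P v) = P v"
    and pP: "\<pi> P = M.p"
    using M.proj_lift by blast
  have P_bcl: "bounded_clinear P" by (rule M.S_bcl[OF PS])
  define Q where "Q = (\<lambda>v. v - P v)"
  have QS: "Q \<in> S" unfolding Q_def by (rule M.S_diff[OF M.S_idl PS])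
  have pQ: "\<pi> Q = 1 - M.p" unfolding Q_def by (simp add: M.pi_diff[OF M.S_idl PS] M.pi_idl pP)
  have P_add: "P (x + y) = P x + P y" for x y by (rule bcl_add[OF P_bcl])
  have P_sc: "P (a *\<^sub>C x) = a *\<^sub>C P x" for a x by (rule bcl_scaleC[OF P_bcl])
  have P_diff: "P (x - y) = P x - P y" for x y by (rule bcl_diff[OF P_bcl])
  have PQ: "P (Q v) = 0" for v by (simp add: Q_def P_diff P_idem)
  have QP: "Q (P v) = 0" for v by (simp add: Q_def P_idem)
  have QQ: "Q (Q v) = Q v" for v by (simp add: Q_def P_diff P_idem)
  have Q_add: "Q (x + y) = Q x + Q y" for x y by (simp add: Q_def P_add algebra_simps)
  have Q_sc: "Q (a *\<^sub>C x) = a *\<^sub>C Q x" for a x by (simp add: Q_def P_sc scaleC_diff_right)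
  have P_sa': "cinner (P x) y = cinner x (P y)" for x y by (rule selfadj_D[OF P_sa])
  have Q_sa': "cinner (Q x) y = cinner x (Q y)" for x y
    by (simp add: Q_def cinner_diff_left cinner_diff_right P_sa')
  define \<psi> where "\<psi> z = (\<lambda>v. cc1 z *\<^sub>C P v + cc2 z *\<^sub>C Q v)" for z
  have \<psi>S: "\<psi> z \<in> S" for z unfolding \<psi>_def by (intro M.S_add M.S_scale PS QS)
  have \<pi>\<psi>: "\<pi> (\<psi> z) = \<phi> z" for z
  proof -
    have "\<pi> (\<psi> z) = cc1 z *\<^sub>C \<pi> P + cc2 z *\<^sub>C \<pi> Q"
      unfolding \<psi>_def by (simp add: M.pi_add[OF M.S_scale[OF PS] M.S_scale[OF QS]] M.pi_scale PS QS)
    also have "\<dots> = \<phi> z" by (simp add: M.phi_formula pP pQ)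
    finally show ?thesis .
  qed
  have hom: "unital_star_hom_to_ops \<psi>"
    unfolding unital_star_hom_to_ops_def
  proof (intro conjI allI)
    fix x y :: cc
    show "\<psi> (x + y) = (\<lambda>v. \<psi> x v + \<psi> y v)"
      by (rule ext) (simp add: \<psi>_def scaleC_add_left algebra_simps)
    show "\<psi> (x * y) = \<psi> x \<circ> \<psi> y"
    proof (rule ext)
      fix v
      have "(\<psi> x \<circ> \<psi> y) v = cc1 x *\<^sub>C P (cc1 y *\<^sub>C P v + cc2 y *\<^sub>C Q v) + cc2 x *\<^sub>C Q (cc1 y *\<^sub>C P v + cc2 y *\<^sub>C Q v)"
        by (simp add: \<psi>_def)
      also have "\<dots> = (cc1 x * cc1 y) *\<^sub>C P v + (cc2 x * cc2 y) *\<^sub>C Q v"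
        by (simp add: P_add P_sc Q_add Q_sc P_idem PQ QP QQ scaleC_scaleC)
      finally show "\<psi> (x * y) v = (\<psi> x \<circ> \<psi> y) v" by (simp add: \<psi>_def)
    qed
  next
    fix a x
    show "\<psi> (a *\<^sub>C x) = (\<lambda>v. a *\<^sub>C \<psi> x v)"
      by (rule ext) (simp add: \<psi>_def scaleC_cc_def scaleC_add_right scaleC_scaleC)
  next
    fix x
    show "\<psi> (cstar x) = adjoint (\<psi> x)"
    proof (rule sym, rule adjoint_eqI)
      fix u w
      show "cinner (\<psi> x u) w = cinner u (\<psi> (cstar x) w)"
        by (simp add: \<psi>_def cstar_cc_def cinner_add_left cinner_add_right cinner_scaleC_left
            cinner_scaleC_right P_sa' Q_sa')
    qed
  next
    show "\<psi> 1 = id"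
      by (rule ext) (simp add: \<psi>_def Q_def scaleC_one)
  qed
  show ?thesis using \<psi>S hom \<pi>\<psi> by blast
qed

end
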